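(* Consider a stationary $K$-armed bandit ($M=1$: each arm $k$ has a fixed reward distribution on $[0,1]$ with mean $\mu_k$, rewards independent across arms and time) with horizon $T$, and run the M-UCB algorithm with any parameters $w$ (even positive integer), $b>0$, $\gamma\in(0,1]$. Let $\tau_1$ be the first detection time. Then $$\mathcal R(T)\le T\cdot\mathbb P(\tau_1\le T)+\tilde C+\gamma T,\qquad \tilde C=8\sum_{k:\Delta_k>0}\frac{\log T}{\Delta_k}+\Big(1+\frac{\pi^2}{3}+K\Big)\sum_{k=1}^K\Delta_k,$$ where $\Delta_k=\max_{\tilde k}\mu_{\tilde k}-\mu_k$.
   Context: At each time the agent picks arm $A_t$ based on past actions and observations and observes only $X_{A_t,t}$. Regret: $\mathcal R(T)=\sum_{t=1}^T\max_k\mathbb E[X_{k,t}]-\mathbb E[\sum_{t=1}^TX_{A_t,t}]$. Logarithms are natural. M-UCB algorithm (inputs $T,K$, even integer $w>0$, $b>0$, $\gamma\in(0,1]$): initialize $\tau\leftarrow0$, $n_k\leftarrow0$ for all $k$. For $t=1,\dots,T$: let $A=(t-\tau)\bmod\lfloor K/\gamma\rfloor$; if $1\le A\le K$ set $A_t=A$; otherwise set $A_t\in\arg\max_k\big(\frac1{n_k}\sum_{n=1}^{n_k}Z_{k,n}+\sqrt{2\log(t-\tau)/n_k}\big)$. Play $A_t$, observe $X_{A_t,t}$, set $n_{A_t}\leftarrow n_{A_t}+1$, $Z_{A_t,n_{A_t}}\leftarrow X_{A_t,t}$. If $n_{A_t}\ge w$ and the last $w$ stored observations $Y_1,\dots,Y_w$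 of arm $A_t$ satisfy $\left|\sum_{j=w/2+1}^{w}Y_j-\sum_{j=1}^{w/2}Y_j\right|>b$, this is a detection: set $\tau\leftarrow t$ and $n_k\leftarrow0$ for all $k$. The first detection time $\tau_1$ is the first $t$ at which a detection occurs ($+\infty$ if none). *)

theory Defs
  imports "HOL-Probability.Probability"
begin

text \<open>State of M-UCB after a round: (tau, n, Z, detection record).
  Arms are 1..K, rounds are 1..T.  Z k j is the j-th stored observation of arm k.
  The last component is Some t0 once a detection has occurred (t0 = first detection time).\<close>

type_synonym mucb_state = "nat \<times> (nat \<Rightarrow> nat) \<times> (nat \<Rightarrow> nat \<Rightarrow> real) \<times> nat option"

definition ucb_index :: "(nat \<Rightarrow> nat) \<Rightarrow> (nat \<Rightarrow> nat \<Rightarrow> real) \<Rightarrow> nat \<Rightarrow> nat \<Rightarrow> nat \<Rightarrow> real" where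
  "ucb_index n Z tau t k =
     (\<Sum>j=1..n k. Z k j) / real (n k) + sqrt (2 * ln (real (t - tau)) / real (n k))"

text \<open>Set of UCB maximisers; an arm with n_k = 0 has index +infinity.\<close>
definition ucb_argmax :: "nat \<Rightarrow> (nat \<Rightarrow> nat) \<Rightarrow> (nat \<Rightarrow> nat \<Rightarrow> real) \<Rightarrow> nat \<Rightarrow> nat \<Rightarrow> nat set" where
  "ucb_argmax K n Z tau t =
     (if \<exists>k\<in>{1..K}. n k = 0 then {k\<in>{1..K}. n k = 0}
      else {k\<in>{1..K}. \<forall>k'\<in>{1..K}. ucb_index n Z tau t k' \<le> ucb_index n Z tau t k})"

text \<open>Action at round t given the state after round t-1; ties among maximisers are
  broken by an arbitrary rule tb (depending on t and the set of maximisers).\<close>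
definition mucb_action ::
  "nat \<Rightarrow> real \<Rightarrow> (nat \<Rightarrow> nat set \<Rightarrow> nat) \<Rightarrow> nat \<Rightarrow> mucb_state \<Rightarrow> nat" where
  "mucb_action K \<gamma> tb t s = (case s of (tau, n, Z, d) \<Rightarrow>
     (let A = (t - tau) mod nat \<lfloor>real K / \<gamma>\<rfloor> in
      if 1 \<le> A \<and> A \<le> K then A else tb t (ucb_argmax K n Z tau t)))"

definition mucb_detect :: "nat \<Rightarrow> real \<Rightarrow> (nat \<Rightarrow> nat \<Rightarrow> real) \<Rightarrow> nat \<Rightarrow> nat \<Rightarrow> bool" where
  "mucb_detect w b Z a m =
     (w \<le> m \<and>
      \<bar>(\<Sum>j\<in>{w div 2 + 1..w}. Z a (m - w + j)) - (\<Sum>j\<in>{1..w div 2}. Z a (m - w + j))\<bar> > b)"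

definition mucb_step ::
  "nat \<Rightarrow> nat \<Rightarrow> real \<Rightarrow> real \<Rightarrow> (nat \<Rightarrow> nat set \<Rightarrow> nat) \<Rightarrow> (nat \<Rightarrow> nat \<Rightarrow> real)
   \<Rightarrow> nat \<Rightarrow> mucb_state \<Rightarrow> mucb_state" where
  "mucb_step K w b \<gamma> tb x t s = (case s of (tau, n, Z, d) \<Rightarrow>
     (let a = mucb_action K \<gamma> tb t s;
          m = Suc (n a);
          n' = n(a := m);
          Z' = Z(a := (Z a)(m := x a t)) in
      if mucb_detect w b Z' a m
      then (t, (\<lambda>_. 0), Z', (case d of None \<Rightarrow> Some t | Some t0 \<Rightarrow> Some t0))
      else (tau, n', Z', d)))"

text \<open>State after rounds 1..t, when the reward table is x (x k t = X_{k,t}).\<close>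
primrec mucb_run ::
  "nat \<Rightarrow> nat \<Rightarrow> real \<Rightarrow> real \<Rightarrow> (nat \<Rightarrow> nat set \<Rightarrow> nat) \<Rightarrow> (nat \<Rightarrow> nat \<Rightarrow> real)
   \<Rightarrow> nat \<Rightarrow> mucb_state" where
  "mucb_run K w b \<gamma> tb x 0 = (0, (\<lambda>_. 0), (\<lambda>_ _. 0), None)"
| "mucb_run K w b \<gamma> tb x (Suc t) =
     mucb_step K w b \<gamma> tb x (Suc t) (mucb_run K w b \<gamma> tb x t)"

definition mucb_arm ::
  "nat \<Rightarrow> nat \<Rightarrow> real \<Rightarrow> real \<Rightarrow> (nat \<Rightarrow> nat set \<Rightarrow> nat) \<Rightarrow> (nat \<Rightarrow> nat \<Rightarrow> real)
   \<Rightarrow> nat \<Rightarrow> nat" where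
  "mucb_arm K w b \<gamma> tb x t = mucb_action K \<gamma> tb t (mucb_run K w b \<gamma> tb x (t - 1))"

definition mucb_tau1 ::
  "nat \<Rightarrow> nat \<Rightarrow> real \<Rightarrow> real \<Rightarrow> (nat \<Rightarrow> nat set \<Rightarrow> nat) \<Rightarrow> (nat \<Rightarrow> nat \<Rightarrow> real) \<Rightarrow> enat" where
  "mucb_tau1 K w b \<gamma> tb x =
     (if \<exists>t. snd (snd (snd (mucb_run K w b \<gamma> tb x t))) \<noteq> None
      then enat (LEAST t. snd (snd (snd (mucb_run K w b \<gamma> tb x t))) \<noteq> None)
      else \<infinity>)"

end

theory Submission
  imports Defs
begin

declare mucb_run.simps(2)[simp del]

definition tauS :: "mucb_state \<Rightarrow> nat" where "tauS s = fst s"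
definition nS :: "mucb_state \<Rightarrow> nat \<Rightarrow> nat" where "nS s = fst (snd s)"
definition ZS :: "mucb_state \<Rightarrow> nat \<Rightarrow> nat \<Rightarrow> real" where "ZS s = fst (snd (snd s))"
definition dS :: "mucb_state \<Rightarrow> nat option" where "dS s = snd (snd (snd s))"

lemma state_eta: "s = (tauS s, nS s, ZS s, dS s)"
  by (simp add: tauS_def nS_def ZS_def dS_def)

lemma step_eq: "mucb_step K w b \<gamma> tb x t s =
  (let a = mucb_action K \<gamma> tb t s; m = Suc (nS s a);
       Z' = (ZS s)(a := (ZS s a)(m := x a t)) in
   if mucb_detect w b Z' a m then (t, \<lambda>_. 0, Z', Some (case dS s of None \<Rightarrow> t | Some t0 \<Rightarrow> t0))
   else (tauS s, (nS s)(a := m), Z', dS s))"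
  by (cases s) (auto simp: mucb_step_def tauS_def nS_def ZS_def dS_def Let_def split: option.split)

lemma action_eq: "mucb_action K \<gamma> tb t s =
     (let A = (t - tauS s) mod nat \<lfloor>real K / \<gamma>\<rfloor> in
      if 1 \<le> A \<and> A \<le> K then A else tb t (ucb_argmax K (nS s) (ZS s) (tauS s) t))"
  by (simp add: mucb_action_def tauS_def nS_def ZS_def case_prod_beta Let_def)

lemma argmax_sub: "ucb_argmax K n Z tau t \<subseteq> {1..K}"
  by (auto simp: ucb_argmax_def)

lemma argmax_ne: assumes "1 \<le> K" shows "ucb_argmax K n Z tau t \<noteq> {}"
proof (cases "\<exists>k\<in>{1..K}. n k = 0")
  case True then show ?thesis by (auto simp: ucb_argmax_def)
next
  case False
  let ?f = "ucb_index n Z tau t"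
  have fin: "finite (?f ` {1..K})" and ne: "?f ` {1..K} \<noteq> {}" using assms by auto
  obtain k where k: "k \<in> {1..K}" "?f k = Max (?f ` {1..K})"
    using Max_in[OF fin ne] by auto
  have "\<forall>k'\<in>{1..K}. ?f k' \<le> ?f k" using k Max_ge[OF fin] by auto
  with k False show ?thesis by (auto simp: ucb_argmax_def)
qed

lemma mod_bound_card:
  fixes L k T :: nat assumes "L \<ge> 1"
  shows "card {r \<in> {1..T}. r mod L = k} \<le> T div L + 1"
proof -
  have inj: "inj_on (\<lambda>r. r div L) {r \<in> {1..T}. r mod L = k}"
    by (rule inj_onI) (metis (mono_tags, lifting) div_mult_mod_eq mem_Collect_eq)
  have "(\<lambda>r. r div L) ` {r \<in> {1..T}. r mod L = k} \<subseteq> {..T div L}"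
    by (auto intro: div_le_mono)
  hence "card ((\<lambda>r. r div L) ` {r \<in> {1..T}. r mod L = k}) \<le> card {..T div L}"
    by (intro card_mono) auto
  with card_image[OF inj] show ?thesis by simp
qed

lemma no_detect_w:
  assumes "\<And>j. Z a j \<in> {0..1}"
  shows "\<not> mucb_detect w (real w) Z a m"
proof -
  let ?A = "(\<Sum>j\<in>{w div 2 + 1..w}. Z a (m - w + j))"
  let ?B = "(\<Sum>j\<in>{1..w div 2}. Z a (m - w + j))"
  have A0: "0 \<le> ?A" and B0: "0 \<le> ?B" using assms by (auto intro: sum_nonneg)
  have "?A \<le> real (card {w div 2 + 1..w}) * 1"
    by (rule sum_bounded_above) (use assms in auto)
  hence A1: "?A \<le> real w" by simp
  have "?B \<le> real (card {1..w div 2}) * 1"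
    by (rule sum_bounded_above) (use assms in auto)
  hence B1: "?B \<le> real w" by simp
  have "\<bar>?A - ?B\<bar> \<le> real w" using A0 B0 A1 B1 by linarith
  thus ?thesis by (simp add: mucb_detect_def)
qed

locale mucb =
  fixes K :: nat and \<gamma> :: real and tb :: "nat \<Rightarrow> nat set \<Rightarrow> nat"
  assumes K1: "1 \<le> K" and gam0: "0 < \<gamma>" and gam1: "\<gamma> \<le> 1"
    and tbS: "\<And>t S. S \<noteq> {} \<Longrightarrow> S \<subseteq> {1..K} \<Longrightarrow> tb t S \<in> S"
begin

definition L :: nat where "L = nat \<lfloor>real K / \<gamma>\<rfloor>"

lemma floor_ge_K: "int K \<le> \<lfloor>real K / \<gamma>\<rfloor>"
proof -
  have "real K \<le> real K / \<gamma>" using gam0 gam1 by (simp add: le_divide_eq mult_left_le)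
  thus ?thesis by (simp add: le_floor_iff)
qed

lemma L_ge_K: "K \<le> L"
  using floor_ge_K unfolding L_def by linarith

lemma L_pos: "1 \<le> L" using L_ge_K K1 by simp

lemma L_gamma: "real K - 1 \<le> \<gamma> * real L"
proof -
  have "real K / \<gamma> < \<lfloor>real K / \<gamma>\<rfloor> + 1" by linarith
  moreover have "real L = \<lfloor>real K / \<gamma>\<rfloor>" unfolding L_def using floor_ge_K by simp
  ultimately have "real K / \<gamma> < real L + 1" by simp
  hence "real K < \<gamma> * (real L + 1)" using gam0 by (simp add: divide_less_eq mult.commute)
  thus ?thesis using gam1 by (simp add: algebra_simps)
qed

lemma action_in: "mucb_action K \<gamma> tb t s \<in> {1..K}"
proof -
  have "tb t (ucb_argmax K (nS s) (ZS s) (tauS s) t) \<in> {1..K}"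
    using tbS[OF argmax_ne[OF K1] argmax_sub] argmax_sub by blast
  thus ?thesis unfolding action_eq L_def[symmetric] Let_def by auto
qed

abbreviation run where "run w b x t \<equiv> mucb_run K w b \<gamma> tb x t"

lemma run_Suc: "run w b x (Suc t) = mucb_step K w b \<gamma> tb x (Suc t) (run w b x t)"
  by (simp add: mucb_run.simps)

lemma run_cong:
  assumes "\<And>k s. k \<in> {1..K} \<Longrightarrow> s \<in> {1..t} \<Longrightarrow> x k s = y k s"
  shows "run w b x t = run w b y t"
  using assms
proof (induction t)
  case 0 then show ?case by simp
next
  case (Suc t)
  have IH: "run w b x t = run w b y t" using Suc by auto
  let ?s = "run w b x t"
  let ?a = "mucb_action K \<gamma> tb (Suc t) ?s"
  have "x ?a (Suc t) = y ?a (Suc t)" using Suc.prems action_in by auto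
  thus ?case by (simp only: run_Suc IH[symmetric] step_eq Let_def)
qed

lemma d_mono_Suc: "dS (run w b x t) \<noteq> None \<Longrightarrow> dS (run w b x (Suc t)) \<noteq> None"
  by (simp only: run_Suc step_eq Let_def) (auto simp: dS_def split: if_splits)

lemma d_mono: assumes "t \<le> t'" "dS (run w b x t) \<noteq> None" shows "dS (run w b x t') \<noteq> None"
  using assms(1)
proof (induction t' rule: dec_induct)
  case base then show ?case using assms(2) .
next
  case (step n) then show ?case using d_mono_Suc by blast
qed

lemma d_0: "dS (run w b x 0) = None" by (simp add: dS_def)

lemma tau1_le_iff: "mucb_tau1 K w b \<gamma> tb x \<le> enat T \<longleftrightarrow> dS (run w b x T) \<noteq> None"
proof
  assume a: "mucb_tau1 K w b \<gamma> tb x \<le> enat T"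
  hence ex: "\<exists>t. dS (run w b x t) \<noteq> None"
    unfolding mucb_tau1_def dS_def by (auto split: if_splits)
  let ?t = "LEAST t. dS (run w b x t) \<noteq> None"
  have "?t \<le> T" using a ex unfolding mucb_tau1_def dS_def by auto
  moreover have "dS (run w b x ?t) \<noteq> None" using LeastI_ex[OF ex] .
  ultimately show "dS (run w b x T) \<noteq> None" using d_mono by blast
next
  assume a: "dS (run w b x T) \<noteq> None"
  hence "(LEAST t. dS (run w b x t) \<noteq> None) \<le> T" by (rule Least_le)
  with a show "mucb_tau1 K w b \<gamma> tb x \<le> enat T"
    unfolding mucb_tau1_def dS_def by auto
qed

lemma Z_range:
  assumes "\<And>k s. k \<in> {1..K} \<Longrightarrow> s \<in> {1..t} \<Longrightarrow> x k s \<in> {0..1}"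
  shows "ZS (run w b x t) k j \<in> {0..1}"
  using assms
proof (induction t arbitrary: k j)
  case 0 then show ?case by (simp add: ZS_def)
next
  case (Suc t)
  let ?s = "run w b x t"
  let ?a = "mucb_action K \<gamma> tb (Suc t) ?s"
  have xa: "x ?a (Suc t) \<in> {0..1}" using Suc.prems action_in by auto
  have IH: "\<And>k j. ZS ?s k j \<in> {0..1}" using Suc by auto
  show ?case using xa IH
    by (simp only: run_Suc step_eq Let_def) (auto simp: ZS_def)
qed

lemma n_le: "nS (run w b x t) k \<le> t"
proof (induction t arbitrary: k)
  case 0 then show ?case by (simp add: nS_def)
next
  case (Suc t)
  thus ?case by (simp only: run_Suc step_eq Let_def) (auto simp: nS_def le_SucI)
qed

text \<open>The no-reset run (threshold w never triggers).\<close>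

definition inr :: "(nat \<Rightarrow> nat \<Rightarrow> real) \<Rightarrow> nat \<Rightarrow> bool" where
  "inr x t \<longleftrightarrow> (\<forall>k\<in>{1..K}. \<forall>s\<in>{1..t}. x k s \<in> {0..1})"

lemma inr_mono: "inr x t \<Longrightarrow> t' \<le> t \<Longrightarrow> inr x t'"
  by (auto simp: inr_def)

abbreviation act where "act w b x t \<equiv> mucb_action K \<gamma> tb (Suc t) (run w b x t)"

lemma nr_step:
  assumes "inr x (Suc t)"
  shows "run w (real w) x (Suc t) =
    (let s = run w (real w) x t; a = act w (real w) x t in
     (tauS s, (nS s)(a := Suc (nS s a)), (ZS s)(a := (ZS s a)(Suc (nS s a) := x a (Suc t))), dS s))"
proof -
  let ?s = "run w (real w) x t"
  let ?a = "act w (real w) x t"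
  let ?Z' = "(ZS ?s)(?a := (ZS ?s ?a)(Suc (nS ?s ?a) := x ?a (Suc t)))"
  have "ZS ?s ?a j \<in> {0..1}" for j
    using assms by (intro Z_range) (auto simp: inr_def)
  moreover have "x ?a (Suc t) \<in> {0..1}" using assms action_in by (auto simp: inr_def)
  ultimately have "?Z' ?a j \<in> {0..1}" for j by auto
  hence "\<not> mucb_detect w (real w) ?Z' ?a (Suc (nS ?s ?a))"
    by (intro no_detect_w) auto
  thus ?thesis by (simp only: run_Suc step_eq Let_def if_False)
qed

lemma nr_tau_d:
  assumes "inr x t"
  shows "tauS (run w (real w) x t) = 0 \<and> dS (run w (real w) x t) = None"
  using assms
proof (induction t)
  case 0 then show ?case by (simp add: tauS_def dS_def)
next
  case (Suc t)
  hence "inr x t" by (auto simp: inr_def)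
  with Suc show ?case by (simp add: nr_step[OF Suc.prems] Let_def tauS_def dS_def)
qed

lemma couple:
  assumes "inr x t" "dS (run w b x t) = None"
  shows "run w b x t = run w (real w) x t"
  using assms
proof (induction t)
  case 0 then show ?case by simp
next
  case (Suc t)
  have it: "inr x t" using Suc.prems by (auto simp: inr_def)
  have dt: "dS (run w b x t) = None" using Suc.prems(2) d_mono_Suc by blast
  have eq: "run w b x t = run w (real w) x t" using Suc.IH it dt by blast
  let ?s = "run w b x t"
  let ?a = "act w b x t"
  let ?Z' = "(ZS ?s)(?a := (ZS ?s ?a)(Suc (nS ?s ?a) := x ?a (Suc t)))"
  have nd: "\<not> mucb_detect w b ?Z' ?a (Suc (nS ?s ?a))"
  proof
    assume "mucb_detect w b ?Z' ?a (Suc (nS ?s ?a))"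
    hence "dS (run w b x (Suc t)) \<noteq> None"
      by (simp only: run_Suc step_eq Let_def) (simp add: dS_def)
    with Suc.prems(2) show False by simp
  qed
  have "run w b x (Suc t) = (tauS ?s, (nS ?s)(?a := Suc (nS ?s ?a)), ?Z', dS ?s)"
    using nd by (simp only: run_Suc step_eq Let_def if_False)
  also have "\<dots> = run w (real w) x (Suc t)"
    unfolding nr_step[OF Suc.prems(1)] Let_def eq ..
  finally show ?case .
qed

lemma nr_n_step:
  assumes "inr x (Suc t)"
  shows "nS (run w (real w) x (Suc t)) k = nS (run w (real w) x t) k + (if act w (real w) x t = k then 1 else 0)"
  using nr_step[OF assms] by (simp add: Let_def nS_def)

lemma nr_Z_step:
  assumes "inr x (Suc t)"
  shows "ZS (run w (real w) x (Suc t)) k j =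
     (if act w (real w) x t = k \<and> j = Suc (nS (run w (real w) x t) k) then x k (Suc t)
      else ZS (run w (real w) x t) k j)"
  using nr_step[OF assms] by (simp add: Let_def ZS_def)

lemma nr_act_forced:
  assumes "inr x t" "1 \<le> Suc t mod L" "Suc t mod L \<le> K"
  shows "act w (real w) x t = Suc t mod L"
  using assms nr_tau_d[OF assms(1)] by (simp add: action_eq L_def[symmetric] Let_def)

lemma nr_act_ucb:
  assumes "inr x t" "\<not> (1 \<le> Suc t mod L \<and> Suc t mod L \<le> K)"
  shows "act w (real w) x t \<in> ucb_argmax K (nS (run w (real w) x t)) (ZS (run w (real w) x t)) 0 (Suc t)"
proof -
  let ?S = "ucb_argmax K (nS (run w (real w) x t)) (ZS (run w (real w) x t)) 0 (Suc t)"
  have "tb (Suc t) ?S \<in> ?S" by (rule tbS[OF argmax_ne[OF K1] argmax_sub])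
  thus ?thesis using assms nr_tau_d[OF assms(1)] by (auto simp: action_eq L_def[symmetric] Let_def)
qed

lemma small_count:
  assumes "inr x T"
  shows "t \<le> T \<Longrightarrow> card {s \<in> {..<t}. act w (real w) x s = k \<and> nS (run w (real w) x s) k < l}
           \<le> min (nS (run w (real w) x t) k) l"
proof (induction t)
  case 0 then show ?case by (simp add: nS_def)
next
  case (Suc t)
  have inr: "inr x (Suc t)" using assms Suc.prems inr_mono by blast
  let ?P = "\<lambda>s. act w (real w) x s = k \<and> nS (run w (real w) x s) k < l"
  have set: "{s \<in> {..<Suc t}. ?P s} = {s \<in> {..<t}. ?P s} \<union> (if ?P t then {t} else {})"
    by (auto simp: less_Suc_eq)
  have IH: "card {s \<in> {..<t}. ?P s} \<le> min (nS (run w (real w) x t) k) l" using Suc by simp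
  show ?case
  proof (cases "?P t")
    case True
    have "card {s \<in> {..<Suc t}. ?P s} = card {s \<in> {..<t}. ?P s} + 1"
      unfolding set using True by (simp add: card_insert_if)
    thus ?thesis using IH True nr_n_step[OF inr, where k=k] by simp
  next
    case False
    hence "card {s \<in> {..<Suc t}. ?P s} = card {s \<in> {..<t}. ?P s}" unfolding set by simp
    thus ?thesis using IH nr_n_step[OF inr, where k=k] by simp
  qed
qed

end

context mucb begin

definition smeas :: "'b measure \<Rightarrow> ('b \<Rightarrow> mucb_state) \<Rightarrow> bool" where
  "smeas N s \<longleftrightarrow> (\<lambda>\<omega>. tauS (s \<omega>)) \<in> measurable N (count_space UNIV) \<and>
     (\<forall>k. (\<lambda>\<omega>. nS (s \<omega>) k) \<in> measurable N (count_space UNIV)) \<and>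
     (\<forall>k j. (\<lambda>\<omega>. ZS (s \<omega>) k j) \<in> borel_measurable N) \<and>
     (\<lambda>\<omega>. dS (s \<omega>)) \<in> measurable N (count_space UNIV)"

lemma cmp_nat:
  fixes g :: "'b \<Rightarrow> nat" and f :: "nat \<Rightarrow> 'b \<Rightarrow> 'c"
  assumes "g \<in> measurable N (count_space UNIV)" "\<And>i. f i \<in> measurable N M"
  shows "(\<lambda>\<omega>. f (g \<omega>) \<omega>) \<in> measurable N M"
  by (rule measurable_compose_countable'[where I=UNIV]) (use assms in auto)

lemma idx_meas:
  assumes "smeas N s"
  shows "(\<lambda>\<omega>. ucb_index (nS (s \<omega>)) (ZS (s \<omega>)) (tauS (s \<omega>)) t k) \<in> borel_measurable N"
proof -
  have n: "(\<lambda>\<omega>. nS (s \<omega>) k) \<in> measurable N (count_space UNIV)"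
   and ta: "(\<lambda>\<omega>. tauS (s \<omega>)) \<in> measurable N (count_space UNIV)"
   and Z: "\<And>j. (\<lambda>\<omega>. ZS (s \<omega>) k j) \<in> borel_measurable N"
    using assms by (auto simp: smeas_def)
  have 1: "(\<lambda>\<omega>. (\<lambda>i \<omega>. (\<Sum>j=1..i. ZS (s \<omega>) k j)) (nS (s \<omega>) k) \<omega>) \<in> borel_measurable N"
    by (rule cmp_nat[OF n]) (use Z in measurable)
  have 2: "(\<lambda>\<omega>. (\<lambda>i \<omega>. real i) (nS (s \<omega>) k) \<omega>) \<in> borel_measurable N"
    by (rule cmp_nat[OF n]) auto
  have 3: "(\<lambda>\<omega>. (\<lambda>i \<omega>. ln (real (t - i))) (tauS (s \<omega>)) \<omega>) \<in> borel_measurable N"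
    by (rule cmp_nat[OF ta]) auto
  show ?thesis unfolding ucb_index_def using 1 2 3 by simp measurable
qed


lemma argmax_meas:
  assumes "smeas N s"
  shows "(\<lambda>\<omega>. ucb_argmax K (nS (s \<omega>)) (ZS (s \<omega>)) (tauS (s \<omega>)) t) \<in> measurable N (count_space (Pow {1..K}))"
proof -
  let ?n = "\<lambda>\<omega>. nS (s \<omega>)"
  let ?i = "\<lambda>\<omega> k. ucb_index (nS (s \<omega>)) (ZS (s \<omega>)) (tauS (s \<omega>)) t k"
  define P where "P k \<omega> \<longleftrightarrow> (if \<exists>k'\<in>{1..K}. ?n \<omega> k' = 0 then ?n \<omega> k = 0 else \<forall>k'\<in>{1..K}. ?i \<omega> k' \<le> ?i \<omega> k)" for k \<omega>
  have n[measurable]: "\<And>k. (\<lambda>\<omega>. nS (s \<omega>) k) \<in> measurable N (count_space UNIV)"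
    using assms by (auto simp: smeas_def)
  have i[measurable]: "\<And>k. (\<lambda>\<omega>. ?i \<omega> k) \<in> borel_measurable N"
    using idx_meas[OF assms] .
  have t1[measurable]: "Measurable.pred N (\<lambda>\<omega>. nS (s \<omega>) k = 0)" for k by (rule pred_count_space_const1[OF n])
  have t2: "Measurable.pred N (\<lambda>\<omega>. \<exists>k'\<in>{1..K}. nS (s \<omega>) k' = 0)" by measurable
  have t3: "Measurable.pred N (\<lambda>\<omega>. \<forall>k'\<in>{1..K}. ?i \<omega> k' \<le> ?i \<omega> k)" for k by measurable
  have Pm: "Measurable.pred N (P k)" for k unfolding P_def if_bool_eq_conj by measurable
  show ?thesis
  proof (rule measurable_count_space_eq_countable[THEN iffD2, OF countable_finite], simp, intro conjI ballI)
    show "(\<lambda>\<omega>. ucb_argmax K (nS (s \<omega>)) (ZS (s \<omega>)) (tauS (s \<omega>)) t) \<in> space N \<rightarrow> Pow {1..K}"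
      using argmax_sub by auto
  next
    fix S assume S: "S \<in> Pow {1..K}"
    have "(\<lambda>\<omega>. ucb_argmax K (nS (s \<omega>)) (ZS (s \<omega>)) (tauS (s \<omega>)) t) -` {S} \<inter> space N
          = {\<omega> \<in> space N. \<forall>k\<in>{1..K}. (k \<in> S \<longleftrightarrow> P k \<omega>)}"
    proof -
      have memP: "\<And>\<omega> k. k \<in> {1..K} \<Longrightarrow> (k \<in> ucb_argmax K (nS (s \<omega>)) (ZS (s \<omega>)) (tauS (s \<omega>)) t) = P k \<omega>"
        unfolding P_def ucb_argmax_def by auto
      have eqS: "\<And>A. A \<subseteq> {1..K} \<Longrightarrow> (A = S) = (\<forall>k\<in>{1..K}. k \<in> S \<longleftrightarrow> k \<in> A)"
        using S by blast
      show ?thesis by (intro set_eqI) (simp add: eqS[OF argmax_sub] memP conj_commute)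
    qed
    also have "\<dots> \<in> sets N" using Pm by measurable
    finally show "(\<lambda>\<omega>. ucb_argmax K (nS (s \<omega>)) (ZS (s \<omega>)) (tauS (s \<omega>)) t) -` {S} \<inter> space N \<in> sets N" .
  qed
qed

lemma action_meas:
  assumes "smeas N s"
  shows "(\<lambda>\<omega>. mucb_action K \<gamma> tb t (s \<omega>)) \<in> measurable N (count_space UNIV)"
proof -
  have ta[measurable]: "(\<lambda>\<omega>. tauS (s \<omega>)) \<in> measurable N (count_space UNIV)"
    using assms by (auto simp: smeas_def)
  have am: "(\<lambda>\<omega>. ucb_argmax K (nS (s \<omega>)) (ZS (s \<omega>)) (tauS (s \<omega>)) t) \<in> measurable N (count_space (Pow {1..K}))"
    by (rule argmax_meas[OF assms])
  have tbm[measurable]: "(\<lambda>\<omega>. tb t (ucb_argmax K (nS (s \<omega>)) (ZS (s \<omega>)) (tauS (s \<omega>)) t)) \<in> measurable N (count_space UNIV)"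
    by (rule measurable_compose[OF am]) simp
  show ?thesis unfolding action_eq Let_def L_def[symmetric] by measurable
qed


definition detS where
  "detS w b x t s = (let a = mucb_action K \<gamma> tb t s; m = Suc (nS s a) in
     mucb_detect w b ((ZS s)(a := (ZS s a)(m := x a t))) a m)"

lemma step_comps:
  "tauS (mucb_step K w b \<gamma> tb x t s) = (if detS w b x t s then t else tauS s)"
  "nS (mucb_step K w b \<gamma> tb x t s) k = (if detS w b x t s then 0 else
      if k = mucb_action K \<gamma> tb t s then Suc (nS s k) else nS s k)"
  "ZS (mucb_step K w b \<gamma> tb x t s) k j =
     (if k = mucb_action K \<gamma> tb t s \<and> j = Suc (nS s k) then x k t else ZS s k j)"
  "dS (mucb_step K w b \<gamma> tb x t s) = (if detS w b x t s then
      Some (case dS s of None \<Rightarrow> t | Some t0 \<Rightarrow> t0) else dS s)"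
  by (simp_all add: step_eq detS_def Let_def tauS_def nS_def ZS_def dS_def)

lemma step_meas:
  assumes s: "smeas N s" and xm: "\<And>k j. (\<lambda>\<omega>. x \<omega> k j) \<in> borel_measurable N"
  shows "smeas N (\<lambda>\<omega>. mucb_step K w b \<gamma> tb (x \<omega>) t (s \<omega>))"
proof -
  have ta[measurable]: "(\<lambda>\<omega>. tauS (s \<omega>)) \<in> measurable N (count_space UNIV)"
   and n[measurable]: "\<And>k. (\<lambda>\<omega>. nS (s \<omega>) k) \<in> measurable N (count_space UNIV)"
   and Z[measurable]: "\<And>k j. (\<lambda>\<omega>. ZS (s \<omega>) k j) \<in> borel_measurable N"
   and d[measurable]: "(\<lambda>\<omega>. dS (s \<omega>)) \<in> measurable N (count_space UNIV)"
    using s by (auto simp: smeas_def)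
  have a[measurable]: "(\<lambda>\<omega>. mucb_action K \<gamma> tb t (s \<omega>)) \<in> measurable N (count_space UNIV)"
    by (rule action_meas[OF s])
  let ?a = "\<lambda>\<omega>. mucb_action K \<gamma> tb t (s \<omega>)"
  have pa[measurable]: "Measurable.pred N (\<lambda>\<omega>. k = ?a \<omega>)" for k
    by (rule pred_count_space_const2[OF a])
  have pn[measurable]: "Measurable.pred N (\<lambda>\<omega>. j = Suc (nS (s \<omega>) k))" for j k
  proof -
    have "(\<lambda>\<omega>. Suc (nS (s \<omega>) k)) \<in> measurable N (count_space UNIV)"
      by (rule measurable_compose[OF n]) simp
    thus ?thesis by (rule pred_count_space_const2)
  qed
  have Zm[measurable]: "(\<lambda>\<omega>. ZS (mucb_step K w b \<gamma> tb (x \<omega>) t (s \<omega>)) k j) \<in> borel_measurable N" for k j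
    unfolding step_comps using xm by measurable
  have det[measurable]: "Measurable.pred N (\<lambda>\<omega>. detS w b (x \<omega>) t (s \<omega>))"
  proof -
    let ?Z' = "\<lambda>\<omega>. ZS (mucb_step K w b \<gamma> tb (x \<omega>) t (s \<omega>))"
    have eq: "detS w b (x \<omega>) t (s \<omega>) = mucb_detect w b (?Z' \<omega>) (?a \<omega>) (Suc (nS (s \<omega>) (?a \<omega>)))" for \<omega>
      unfolding detS_def Let_def
      by (rule arg_cong[where f="\<lambda>Z. mucb_detect w b Z _ _"]) (auto simp: step_comps fun_eq_iff)
    have m1: "Measurable.pred N (\<lambda>\<omega>. mucb_detect w b (?Z' \<omega>) a0 m0)" for a0 m0
      unfolding mucb_detect_def by measurable
    have m2: "Measurable.pred N (\<lambda>\<omega>. (\<lambda>i \<omega>. mucb_detect w b (?Z' \<omega>) a0 (Suc i)) (nS (s \<omega>) a0) \<omega>)" for a0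
      by (rule cmp_nat[OF n]) (use m1 in \<open>simp add: pred_def\<close>)
    have m3: "Measurable.pred N (\<lambda>\<omega>. (\<lambda>i \<omega>. mucb_detect w b (?Z' \<omega>) i (Suc (nS (s \<omega>) i))) (?a \<omega>) \<omega>)"
      by (rule cmp_nat[OF a]) (use m2 in \<open>simp add: pred_def\<close>)
    show ?thesis unfolding eq using m3 by simp
  qed
  have cd[measurable]: "(\<lambda>\<omega>. case dS (s \<omega>) of None \<Rightarrow> t | Some t0 \<Rightarrow> t0) \<in> measurable N (count_space UNIV)"
    by (rule measurable_compose[OF d]) simp
  have sn[measurable]: "(\<lambda>\<omega>. Suc (nS (s \<omega>) k)) \<in> measurable N (count_space UNIV)" for k
    by (rule measurable_compose[OF n]) simp
  show ?thesis unfolding smeas_def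
    apply (intro conjI allI)
    subgoal unfolding step_comps by measurable
    subgoal unfolding step_comps by measurable
    subgoal using Zm by simp
    subgoal unfolding step_comps by measurable
    done
qed

lemma run_meas:
  assumes xm: "\<And>k j. (\<lambda>\<omega>. x \<omega> k j) \<in> borel_measurable N"
  shows "smeas N (\<lambda>\<omega>. run w b (x \<omega>) t)"
proof (induction t)
  case 0 then show ?case by (simp add: smeas_def tauS_def nS_def ZS_def dS_def)
next
  case (Suc t) then show ?case unfolding run_Suc by (rule step_meas[OF _ xm])
qed

end

definition clamp01 :: "real \<Rightarrow> real" where "clamp01 y = max 0 (min 1 y)"

lemma clamp01_range: "clamp01 y \<in> {0..1}" by (simp add: clamp01_def)
lemma clamp01_ge[simp]: "0 \<le> clamp01 y" and clamp01_le[simp]: "clamp01 y \<le> 1"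
  by (simp_all add: clamp01_def)
lemma clamp01_id: "y \<in> {0..1} \<Longrightarrow> clamp01 y = y" by (simp add: clamp01_def)
lemma clamp01_meas[measurable]: "clamp01 \<in> borel_measurable borel"
  unfolding clamp01_def by measurable

definition tab :: "(nat \<times> nat) set \<Rightarrow> (nat \<times> nat \<Rightarrow> real) \<Rightarrow> nat \<Rightarrow> nat \<Rightarrow> real" where
  "tab A p k s = (if (k, s) \<in> A then clamp01 (p (k, s)) else 0)"

lemma tab_meas: "(\<lambda>p. tab A p k s) \<in> borel_measurable (PiM A (\<lambda>_. borel))"
proof (cases "(k, s) \<in> A")
  case True
  have "(\<lambda>p. p (k, s)) \<in> borel_measurable (PiM A (\<lambda>_. borel))"
    using True by (rule measurable_component_singleton)
  then show ?thesis using True unfolding tab_def by measurable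
next
  case False then show ?thesis unfolding tab_def by simp
qed

locale bandit = mucb K \<gamma> tb + prob_space M
  for K \<gamma> tb and M :: "'a measure" +
  fixes X :: "nat \<Rightarrow> nat \<Rightarrow> 'a \<Rightarrow> real" and T :: nat
  assumes rv: "\<And>k t. k \<in> {1..K} \<Longrightarrow> t \<in> {1..T} \<Longrightarrow> X k t \<in> borel_measurable M"
    and range01: "\<And>k t \<omega>. k \<in> {1..K} \<Longrightarrow> t \<in> {1..T} \<Longrightarrow> \<omega> \<in> space M \<Longrightarrow> X k t \<omega> \<in> {0..1}"
    and indep: "indep_vars (\<lambda>_. borel) (\<lambda>(k, t). X k t) ({1..K} \<times> {1..T})"
begin

definition I :: "nat \<Rightarrow> (nat \<times> nat) set" where "I t = {1..K} \<times> {1..t}"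

definition past :: "nat \<Rightarrow> 'a \<Rightarrow> (nat \<times> nat \<Rightarrow> real)" where
  "past t \<omega> = restrict (\<lambda>i. (\<lambda>(k, t). X k t) i \<omega>) (I t)"

definition xh :: "'a \<Rightarrow> nat \<Rightarrow> nat \<Rightarrow> real" where
  "xh \<omega> k s = (if (k, s) \<in> I T then clamp01 (X k s \<omega>) else 0)"

lemma xh_meas: "(\<lambda>\<omega>. xh \<omega> k s) \<in> borel_measurable M"
proof (cases "(k, s) \<in> I T")
  case True
  hence "X k s \<in> borel_measurable M" using rv by (auto simp: I_def)
  then show ?thesis using True unfolding xh_def by measurable
next
  case False then show ?thesis unfolding xh_def by simp
qed

lemma xh_inr: "inr (xh \<omega>) t"
  by (auto simp: inr_def xh_def clamp01_range)

lemma tab_inr: "inr (tab A p) t"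
  by (auto simp: inr_def tab_def clamp01_range)

lemma past_meas: "t \<le> T \<Longrightarrow> past t \<in> measurable M (PiM (I t) (\<lambda>_. borel))"
  unfolding past_def
  by (rule measurable_restrict) (auto simp: I_def intro!: rv)

lemma run_xh_past:
  assumes "t \<le> T"
  shows "run w b (xh \<omega>) t = run w b (tab (I t) (past t \<omega>)) t"
  by (rule run_cong) (use assms in \<open>auto simp: xh_def tab_def past_def I_def\<close>)

lemma run_X_xh:
  assumes "t \<le> T" "\<omega> \<in> space M"
  shows "run w b (\<lambda>k s. X k s \<omega>) t = run w b (xh \<omega>) t"
  by (rule run_cong) (use assms in \<open>auto simp: xh_def I_def intro!: clamp01_id[symmetric] range01\<close>)

lemma smeas_xh: "smeas M (\<lambda>\<omega>. run w b (xh \<omega>) t)"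
  by (rule run_meas) (rule xh_meas)

lemma smeas_tab: "smeas (PiM (I t) (\<lambda>_. borel)) (\<lambda>p. run w b (tab (I t) p) t)"
  by (rule run_meas) (rule tab_meas)

lemma indep_fact:
  fixes B C :: real
  assumes t: "Suc t \<le> T" and k: "k \<in> {1..K}"
    and F: "F \<in> borel_measurable (PiM (I t) (\<lambda>_. borel))" and Fb: "\<And>p. \<bar>F p\<bar> \<le> B"
    and g: "g \<in> borel_measurable borel" and gb: "\<And>y. \<bar>g y\<bar> \<le> C"
    and H: "\<And>\<omega>. \<omega> \<in> space M \<Longrightarrow> H \<omega> = F (past t \<omega>)"
  shows "expectation (\<lambda>\<omega>. H \<omega> * g (X k (Suc t) \<omega>)) = expectation H * expectation (\<lambda>\<omega>. g (X k (Suc t) \<omega>))"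
proof -
  let ?X = "\<lambda>(k, t). X k t"
  have iv: "indep_var (PiM (I t) (\<lambda>_. borel)) (\<lambda>\<omega>. restrict (\<lambda>i. ?X i \<omega>) (I t))
                      (PiM {(k, Suc t)} (\<lambda>_. borel)) (\<lambda>\<omega>. restrict (\<lambda>i. ?X i \<omega>) {(k, Suc t)})"
    by (rule indep_var_restrict[OF indep]) (use t k in \<open>auto simp: I_def\<close>)
  have gm: "(\<lambda>q. g (q (k, Suc t))) \<in> borel_measurable (PiM {(k, Suc t)} (\<lambda>_. borel))"
    using g by measurable
  have iv2: "indep_var borel (F \<circ> (\<lambda>\<omega>. restrict (\<lambda>i. ?X i \<omega>) (I t)))
                  borel ((\<lambda>q. g (q (k, Suc t))) \<circ> (\<lambda>\<omega>. restrict (\<lambda>i. ?X i \<omega>) {(k, Suc t)}))"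
    by (rule indep_var_compose[OF iv F gm])
  have e1: "F \<circ> (\<lambda>\<omega>. restrict (\<lambda>i. ?X i \<omega>) (I t)) = (\<lambda>\<omega>. F (past t \<omega>))"
    by (simp add: comp_def past_def)
  have e2: "(\<lambda>q. g (q (k, Suc t))) \<circ> (\<lambda>\<omega>. restrict (\<lambda>i. ?X i \<omega>) {(k, Suc t)}) = (\<lambda>\<omega>. g (X k (Suc t) \<omega>))"
    by (simp add: comp_def)
  have Xm: "X k (Suc t) \<in> borel_measurable M" using rv t k by auto
  have Fm: "(\<lambda>\<omega>. F (past t \<omega>)) \<in> borel_measurable M"
    using measurable_comp[OF past_meas F] t by (simp add: comp_def)
  have i1: "integrable M (\<lambda>\<omega>. F (past t \<omega>))"
    by (rule integrable_const_bound[where B=B]) (use Fb Fm in auto)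
  have gXm: "(\<lambda>\<omega>. g (X k (Suc t) \<omega>)) \<in> borel_measurable M" using Xm g by measurable
  have i2: "integrable M (\<lambda>\<omega>. g (X k (Suc t) \<omega>))"
    by (rule integrable_const_bound[where B=C]) (use gb gXm in auto)
  have "expectation (\<lambda>\<omega>. F (past t \<omega>) * g (X k (Suc t) \<omega>)) =
        expectation (\<lambda>\<omega>. F (past t \<omega>)) * expectation (\<lambda>\<omega>. g (X k (Suc t) \<omega>))"
    by (rule indep_var_lebesgue_integral[OF iv2[unfolded e1 e2] i1 i2])
  moreover have "expectation (\<lambda>\<omega>. H \<omega> * g (X k (Suc t) \<omega>)) = expectation (\<lambda>\<omega>. F (past t \<omega>) * g (X k (Suc t) \<omega>))"
    by (rule Bochner_Integration.integral_cong) (auto simp: H)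
  moreover have "expectation H = expectation (\<lambda>\<omega>. F (past t \<omega>))"
    by (rule Bochner_Integration.integral_cong) (auto simp: H)
  ultimately show ?thesis by simp
qed

end

definition Sf :: "nat \<Rightarrow> nat \<Rightarrow> real \<Rightarrow> real \<Rightarrow> mucb_state \<Rightarrow> real" where
  "Sf k m \<sigma> mu s = (\<Sum>j=1..min (nS s k) m. \<sigma> * (ZS s k j - mu))"

definition Wf :: "nat \<Rightarrow> nat \<Rightarrow> real \<Rightarrow> real \<Rightarrow> real \<Rightarrow> mucb_state \<Rightarrow> real" where
  "Wf k m \<sigma> mu l s = exp (l * Sf k m \<sigma> mu s - l\<^sup>2 / 8 * real (min (nS s k) m))"

lemma Wf_pos: "0 < Wf k m \<sigma> mu l s" by (simp add: Wf_def)

lemma Sf_bound: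
  assumes "\<And>j. ZS s k j \<in> {0..1}" "\<bar>\<sigma>\<bar> = 1"
  shows "\<bar>Sf k m \<sigma> mu s\<bar> \<le> real m * (1 + \<bar>mu\<bar>)"
proof -
  have "\<bar>Sf k m \<sigma> mu s\<bar> \<le> (\<Sum>j=1..min (nS s k) m. \<bar>\<sigma> * (ZS s k j - mu)\<bar>)"
    unfolding Sf_def by (rule sum_abs)
  also have "\<dots> \<le> (\<Sum>j=1..min (nS s k) m. 1 + \<bar>mu\<bar>)"
  proof (rule sum_mono)
    fix j have "ZS s k j \<in> {0..1}" by (rule assms(1))
    thus "\<bar>\<sigma> * (ZS s k j - mu)\<bar> \<le> 1 + \<bar>mu\<bar>" using assms(2) by (auto simp: abs_mult)
  qed
  also have "\<dots> = real (min (nS s k) m) * (1 + \<bar>mu\<bar>)" by simp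
  also have "\<dots> \<le> real m * (1 + \<bar>mu\<bar>)" by (intro mult_right_mono) auto
  finally show ?thesis .
qed

lemma Wf_bound:
  assumes "\<And>j. ZS s k j \<in> {0..1}" "\<bar>\<sigma>\<bar> = 1" "0 \<le> l"
  shows "\<bar>Wf k m \<sigma> mu l s\<bar> \<le> exp (l * (real m * (1 + \<bar>mu\<bar>)))"
proof -
  have "l * Sf k m \<sigma> mu s \<le> l * (real m * (1 + \<bar>mu\<bar>))"
    using Sf_bound[OF assms(1,2), of m mu] assms(3) by (intro mult_left_mono) auto
  moreover have "0 \<le> l\<^sup>2 / 8 * real (min (nS s k) m)" by simp
  ultimately have "l * Sf k m \<sigma> mu s - l\<^sup>2 / 8 * real (min (nS s k) m) \<le> l * (real m * (1 + \<bar>mu\<bar>))"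
    by linarith
  thus ?thesis unfolding Wf_def by simp
qed

context mucb begin

lemma Wf_step:
  assumes "inr x (Suc t)"
  shows "Wf k m \<sigma> mu l (run w (real w) x (Suc t)) = Wf k m \<sigma> mu l (run w (real w) x t) *
     (if act w (real w) x t = k \<and> nS (run w (real w) x t) k < m
      then exp (l * (\<sigma> * (x k (Suc t) - mu)) - l\<^sup>2 / 8) else 1)"
proof -
  let ?s = "run w (real w) x t"
  let ?s' = "run w (real w) x (Suc t)"
  let ?n = "nS ?s k"
  have nS': "nS ?s' k = ?n + (if act w (real w) x t = k then 1 else 0)" by (rule nr_n_step[OF assms])
  have ZS': "\<And>j. ZS ?s' k j = (if act w (real w) x t = k \<and> j = Suc ?n then x k (Suc t) else ZS ?s k j)"
    by (rule nr_Z_step[OF assms])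
  show ?thesis
  proof (cases "act w (real w) x t = k")
    case False
    hence "nS ?s' k = ?n" "\<And>j. ZS ?s' k j = ZS ?s k j" using nS' ZS' by auto
    thus ?thesis using False by (simp add: Wf_def Sf_def)
  next
    case a: True
    show ?thesis
    proof (cases "?n < m")
      case True
      have mn: "min (nS ?s' k) m = Suc ?n" "min ?n m = ?n" using nS' a True by auto
      have "Sf k m \<sigma> mu ?s' = (\<Sum>j=1..Suc ?n. \<sigma> * (ZS ?s' k j - mu))" unfolding Sf_def mn ..
      also have "\<dots> = (\<Sum>j=1..?n. \<sigma> * (ZS ?s' k j - mu)) + \<sigma> * (ZS ?s' k (Suc ?n) - mu)" by simp
      also have "(\<Sum>j=1..?n. \<sigma> * (ZS ?s' k j - mu)) = (\<Sum>j=1..?n. \<sigma> * (ZS ?s k j - mu))"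
        by (rule sum.cong) (auto simp: ZS')
      also have "ZS ?s' k (Suc ?n) = x k (Suc t)" using ZS' a by simp
      finally have S: "Sf k m \<sigma> mu ?s' = Sf k m \<sigma> mu ?s + \<sigma> * (x k (Suc t) - mu)"
        unfolding Sf_def mn by simp
      have "Wf k m \<sigma> mu l ?s' = exp (l * Sf k m \<sigma> mu ?s - l\<^sup>2 / 8 * real ?n + (l * (\<sigma> * (x k (Suc t) - mu)) - l\<^sup>2 / 8))"
        unfolding Wf_def S mn by (simp add: algebra_simps)
      also have "\<dots> = Wf k m \<sigma> mu l ?s * exp (l * (\<sigma> * (x k (Suc t) - mu)) - l\<^sup>2 / 8)"
        unfolding Wf_def mn exp_add ..
      finally show ?thesis using a True by simp
    next
      case False
      have mn: "min (nS ?s' k) m = m" "min ?n m = m" using nS' a False by auto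
      have "Sf k m \<sigma> mu ?s' = Sf k m \<sigma> mu ?s"
        unfolding Sf_def mn using False by (intro sum.cong) (auto simp: ZS')
      thus ?thesis using False unfolding Wf_def mn by simp
    qed
  qed
qed

lemma Wf_meas:
  assumes "smeas N s"
  shows "(\<lambda>\<omega>. Wf k m \<sigma> mu l (s \<omega>)) \<in> borel_measurable N"
proof -
  have n: "(\<lambda>\<omega>. min (nS (s \<omega>) k) m) \<in> measurable N (count_space UNIV)"
  proof -
    have "(\<lambda>\<omega>. nS (s \<omega>) k) \<in> measurable N (count_space UNIV)" using assms unfolding smeas_def by blast
    thus ?thesis by (rule measurable_compose) simp
  qed
  have Z[measurable]: "\<And>j. (\<lambda>\<omega>. ZS (s \<omega>) k j) \<in> borel_measurable N"
    using assms by (auto simp: smeas_def)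
  have "(\<lambda>\<omega>. (\<lambda>i \<omega>. exp (l * (\<Sum>j=1..i. \<sigma> * (ZS (s \<omega>) k j - mu)) - l\<^sup>2 / 8 * real i))
           (min (nS (s \<omega>) k) m) \<omega>) \<in> borel_measurable N"
    by (rule cmp_nat[OF n]) measurable
  thus ?thesis by (simp add: Wf_def Sf_def)
qed

end

locale bandit_mu = bandit K \<gamma> tb M X T for K \<gamma> tb M X T +
  fixes \<mu> :: "nat \<Rightarrow> real"
  assumes mean: "\<And>k t. k \<in> {1..K} \<Longrightarrow> t \<in> {1..T} \<Longrightarrow> \<mu> k = expectation (X k t)"
begin

lemma intg:
  fixes B :: real
  assumes "f \<in> borel_measurable M" "\<And>\<omega>. \<omega> \<in> space M \<Longrightarrow> \<bar>f \<omega>\<bar> \<le> B"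
  shows "integrable M f"
  by (rule integrable_const_bound[where B=B]) (use assms in auto)

lemma g_bound:
  assumes "\<bar>\<sigma>\<bar> = 1" "0 \<le> l"
  shows "\<bar>exp (l * (\<sigma> * (clamp01 y - mu)))\<bar> \<le> exp (l * (1 + \<bar>mu\<bar>))"
proof -
  have "\<bar>\<sigma> * (clamp01 y - mu)\<bar> \<le> 1 + \<bar>mu\<bar>"
  proof -
    have "\<bar>clamp01 y - mu\<bar> \<le> 1 + \<bar>mu\<bar>" using clamp01_ge[of y] clamp01_le[of y] by linarith
    thus ?thesis using assms(1) by (simp add: abs_mult)
  qed
  hence "l * (\<sigma> * (clamp01 y - mu)) \<le> l * (1 + \<bar>mu\<bar>)"
    using assms(2) by (intro mult_left_mono) auto
  thus ?thesis by simp
qed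

lemma hoeff:
  assumes k: "k \<in> {1..K}" and t: "t \<in> {1..T}" and \<sigma>: "\<bar>\<sigma>\<bar> = 1" and l: "0 < l"
  shows "expectation (\<lambda>\<omega>. exp (l * (\<sigma> * (clamp01 (X k t \<omega>) - \<mu> k)))) \<le> exp (l\<^sup>2 / 8)"
proof -
  have Xm[measurable]: "X k t \<in> borel_measurable M" using rv k t by auto
  interpret ibrv: interval_bounded_random_variable M "\<lambda>\<omega>. \<sigma> * X k t \<omega>" "min 0 \<sigma>" "max 0 \<sigma>"
  proof unfold_locales
    show "random_variable borel (\<lambda>\<omega>. \<sigma> * X k t \<omega>)" by measurable
    show "AE x in M. \<sigma> * X k t x \<in> {min 0 \<sigma>..max 0 \<sigma>}"
    proof (rule AE_I2)
      fix x assume "x \<in> space M"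
      hence "X k t x \<in> {0..1}" using range01 k t by auto
      thus "\<sigma> * X k t x \<in> {min 0 \<sigma>..max 0 \<sigma>}" using \<sigma>
        by (cases "\<sigma> \<ge> 0") (auto simp: mult_le_cancel_left1 mult_left_le)
    qed
  qed
  have Ef: "expectation (\<lambda>\<omega>. \<sigma> * X k t \<omega>) = \<sigma> * \<mu> k" using mean[OF k t] by simp
  have wid: "(max 0 \<sigma> - min 0 \<sigma>)\<^sup>2 = 1" using \<sigma> by (cases "\<sigma> \<ge> 0") auto
  have h: "(\<integral>\<^sup>+\<omega>. ennreal (exp (l * (\<sigma> * X k t \<omega> - \<sigma> * \<mu> k))) \<partial>M) \<le> ennreal (exp (l\<^sup>2 / 8))"
    using ibrv.Hoeffdings_lemma_nn_integral[OF l] unfolding Ef wid by simp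
  let ?g = "\<lambda>\<omega>. exp (l * (\<sigma> * (clamp01 (X k t \<omega>) - \<mu> k)))"
  have eqg: "\<And>\<omega>. \<omega> \<in> space M \<Longrightarrow> ?g \<omega> = exp (l * (\<sigma> * X k t \<omega> - \<sigma> * \<mu> k))"
    using range01 k t by (simp add: clamp01_id algebra_simps)
  have gm: "?g \<in> borel_measurable M" by measurable
  have gi: "integrable M ?g"
    by (rule intg[OF gm]) (rule g_bound[OF \<sigma>], use l in simp)
  have "ennreal (expectation ?g) = (\<integral>\<^sup>+\<omega>. ennreal (?g \<omega>) \<partial>M)"
    by (rule nn_integral_eq_integral[symmetric, OF gi]) simp
  also have "\<dots> = (\<integral>\<^sup>+\<omega>. ennreal (exp (l * (\<sigma> * X k t \<omega> - \<sigma> * \<mu> k))) \<partial>M)"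
    by (rule nn_integral_cong) (simp add: eqg)
  also have "\<dots> \<le> ennreal (exp (l\<^sup>2 / 8))" by (rule h)
  finally show ?thesis by (simp add: ennreal_le_iff)
qed


lemma xh_Z_range: "ZS (run w b (xh \<omega>) t) k j \<in> {0..1}"
  by (rule Z_range) (use xh_inr[unfolded inr_def] in blast)

lemma tab_Z_range: "ZS (run w b (tab A p) t) k j \<in> {0..1}"
  by (rule Z_range) (use tab_inr[unfolded inr_def] in blast)

lemma W_exp:
  assumes k: "k \<in> {1..K}" and \<sigma>: "\<bar>\<sigma>\<bar> = 1" and l: "0 < l"
  shows "t \<le> T \<Longrightarrow> expectation (\<lambda>\<omega>. Wf k m \<sigma> (\<mu> k) l (run w (real w) (xh \<omega>) t)) \<le> 1"
proof (induction t)
  case 0 then show ?case by (simp add: Wf_def Sf_def nS_def prob_space)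
next
  case (Suc t)
  have tT: "t \<le> T" and StT: "Suc t \<le> T" using Suc.prems by auto
  define Bw where "Bw = exp (l * (real m * (1 + \<bar>\<mu> k\<bar>)))"
  define Bg where "Bg = exp (l * (1 + \<bar>\<mu> k\<bar>))"
  define W0 where "W0 \<omega> = Wf k m \<sigma> (\<mu> k) l (run w (real w) (xh \<omega>) t)" for \<omega>
  define ai where "ai \<omega> = (if act w (real w) (xh \<omega>) t = k \<and> nS (run w (real w) (xh \<omega>) t) k < m then 1 else 0::real)" for \<omega>
  define g where "g y = exp (l * (\<sigma> * (clamp01 y - \<mu> k)))" for y
  define F where "F p = Wf k m \<sigma> (\<mu> k) l (run w (real w) (tab (I t) p) t) *
     (if act w (real w) (tab (I t) p) t = k \<and> nS (run w (real w) (tab (I t) p) t) k < m then 1 else 0::real)" for p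
  define e where "e = exp (- (l\<^sup>2 / 8))"
  have step: "Wf k m \<sigma> (\<mu> k) l (run w (real w) (xh \<omega>) (Suc t)) =
      W0 \<omega> - W0 \<omega> * ai \<omega> + e * (W0 \<omega> * ai \<omega> * g (X k (Suc t) \<omega>))" for \<omega>
  proof -
    have xv: "xh \<omega> k (Suc t) = clamp01 (X k (Suc t) \<omega>)" using k StT by (simp add: xh_def I_def)
    have ee: "exp (l * (\<sigma> * (clamp01 (X k (Suc t) \<omega>) - \<mu> k)) - l\<^sup>2 / 8) = e * g (X k (Suc t) \<omega>)"
      unfolding e_def g_def by (simp add: mult_exp_exp)
    show ?thesis unfolding Wf_step[OF xh_inr] W0_def[symmetric] xv ee ai_def by simp
  qed
  have sx: "smeas M (\<lambda>\<omega>. run w (real w) (xh \<omega>) t)" by (rule smeas_xh)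
  have st: "smeas (PiM (I t) (\<lambda>_. borel)) (\<lambda>p. run w (real w) (tab (I t) p) t)" by (rule smeas_tab)
  have W0m[measurable]: "W0 \<in> borel_measurable M" unfolding W0_def by (rule Wf_meas[OF sx])
  have nx[measurable]: "(\<lambda>\<omega>. nS (run w (real w) (xh \<omega>) t) k) \<in> measurable M (count_space UNIV)"
    using sx by (simp add: smeas_def)
  have ax[measurable]: "(\<lambda>\<omega>. act w (real w) (xh \<omega>) t) \<in> measurable M (count_space UNIV)"
    by (rule action_meas[OF sx])
  have aim[measurable]: "ai \<in> borel_measurable M" unfolding ai_def by measurable
  have Xm[measurable]: "X k (Suc t) \<in> borel_measurable M" using rv k StT by auto
  have gm[measurable]: "g \<in> borel_measurable borel" unfolding g_def by measurable
  have Wt[measurable]: "(\<lambda>p. Wf k m \<sigma> (\<mu> k) l (run w (real w) (tab (I t) p) t)) \<in> borel_measurable (PiM (I t) (\<lambda>_. borel))"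
    by (rule Wf_meas[OF st])
  have nt[measurable]: "(\<lambda>p. nS (run w (real w) (tab (I t) p) t) k) \<in> measurable (PiM (I t) (\<lambda>_. borel)) (count_space UNIV)"
    using st by (simp add: smeas_def)
  have at[measurable]: "(\<lambda>p. act w (real w) (tab (I t) p) t) \<in> measurable (PiM (I t) (\<lambda>_. borel)) (count_space UNIV)"
    by (rule action_meas[OF st])
  have Fm: "F \<in> borel_measurable (PiM (I t) (\<lambda>_. borel))" unfolding F_def by measurable
  have W0b: "0 < W0 \<omega>" "W0 \<omega> \<le> Bw" for \<omega>
    using Wf_bound[OF _ \<sigma>, of "run w (real w) (xh \<omega>) t" k l m "\<mu> k"] xh_Z_range l Wf_pos
    unfolding W0_def Bw_def by auto
  have aib: "0 \<le> ai \<omega>" "ai \<omega> \<le> 1" for \<omega> unfolding ai_def by auto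
  have Fb: "\<bar>F p\<bar> \<le> Bw" for p
  proof -
    have "\<bar>Wf k m \<sigma> (\<mu> k) l (run w (real w) (tab (I t) p) t)\<bar> \<le> Bw"
      using Wf_bound[OF _ \<sigma>, of "run w (real w) (tab (I t) p) t" k l m "\<mu> k"] tab_Z_range l
      unfolding Bw_def by auto
    thus ?thesis unfolding F_def by auto
  qed
  have gb: "\<bar>g y\<bar> \<le> Bg" for y unfolding g_def Bg_def using g_bound[OF \<sigma>] l by simp
  have gpos: "0 \<le> g y" for y unfolding g_def by simp
  have H: "W0 \<omega> * ai \<omega> = F (past t \<omega>)" for \<omega>
    unfolding W0_def ai_def F_def run_xh_past[OF tT] ..
  have ind: "expectation (\<lambda>\<omega>. (W0 \<omega> * ai \<omega>) * g (X k (Suc t) \<omega>)) =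
        expectation (\<lambda>\<omega>. W0 \<omega> * ai \<omega>) * expectation (\<lambda>\<omega>. g (X k (Suc t) \<omega>))"
    by (rule indep_fact[OF StT k Fm Fb gm gb]) (rule H)
  have i1: "integrable M W0" by (rule intg[where B=Bw]) (use W0b in \<open>auto simp: less_imp_le\<close>)
  have i2: "integrable M (\<lambda>\<omega>. W0 \<omega> * ai \<omega>)"
  proof (rule intg[where B=Bw])
    fix \<omega> show "\<bar>W0 \<omega> * ai \<omega>\<bar> \<le> Bw"
      using W0b[of \<omega>] aib[of \<omega>] by (auto simp: abs_mult intro: order.trans[OF mult_left_le])
  qed measurable
  have i3: "integrable M (\<lambda>\<omega>. e * (W0 \<omega> * ai \<omega> * g (X k (Suc t) \<omega>)))"
  proof (rule intg[where B="e * (Bw * Bg)"])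
    fix \<omega>
    have "\<bar>W0 \<omega> * ai \<omega>\<bar> \<le> Bw"
      using W0b[of \<omega>] aib[of \<omega>] by (auto simp: abs_mult intro: order.trans[OF mult_left_le])
    hence "\<bar>W0 \<omega> * ai \<omega> * g (X k (Suc t) \<omega>)\<bar> \<le> Bw * Bg"
      unfolding abs_mult[of "W0 \<omega> * ai \<omega>"] by (intro mult_mono gb) auto
    thus "\<bar>e * (W0 \<omega> * ai \<omega> * g (X k (Suc t) \<omega>))\<bar> \<le> e * (Bw * Bg)"
      unfolding e_def abs_mult by (simp add: mult_left_mono)
  qed measurable
  have "expectation (\<lambda>\<omega>. Wf k m \<sigma> (\<mu> k) l (run w (real w) (xh \<omega>) (Suc t))) =
        expectation (\<lambda>\<omega>. W0 \<omega> - W0 \<omega> * ai \<omega> + e * (W0 \<omega> * ai \<omega> * g (X k (Suc t) \<omega>)))"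
    unfolding step ..
  also have "\<dots> = expectation W0 - expectation (\<lambda>\<omega>. W0 \<omega> * ai \<omega>) + e * expectation (\<lambda>\<omega>. W0 \<omega> * ai \<omega> * g (X k (Suc t) \<omega>))"
    using i1 i2 i3 by simp
  also have "\<dots> = expectation W0 - expectation (\<lambda>\<omega>. W0 \<omega> * ai \<omega>) + (e * expectation (\<lambda>\<omega>. g (X k (Suc t) \<omega>))) * expectation (\<lambda>\<omega>. W0 \<omega> * ai \<omega>)"
    using ind by simp
  also have "\<dots> \<le> expectation W0"
  proof -
    have "expectation (\<lambda>\<omega>. g (X k (Suc t) \<omega>)) \<le> exp (l\<^sup>2 / 8)"
      unfolding g_def by (rule hoeff[OF k _ \<sigma> l]) (use StT in auto)
    hence "e * expectation (\<lambda>\<omega>. g (X k (Suc t) \<omega>)) \<le> e * exp (l\<^sup>2 / 8)"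
      unfolding e_def by (intro mult_left_mono) auto
    also have "e * exp (l\<^sup>2 / 8) = 1" unfolding e_def by (simp add: exp_minus)
    finally have c1: "e * expectation (\<lambda>\<omega>. g (X k (Suc t) \<omega>)) \<le> 1" .
    have c2: "0 \<le> expectation (\<lambda>\<omega>. W0 \<omega> * ai \<omega>)"
      by (rule integral_nonneg_AE, rule AE_I2, rule mult_nonneg_nonneg[OF less_imp_le[OF W0b(1)] aib(1)])
    have "(e * expectation (\<lambda>\<omega>. g (X k (Suc t) \<omega>))) * expectation (\<lambda>\<omega>. W0 \<omega> * ai \<omega>)
          \<le> 1 * expectation (\<lambda>\<omega>. W0 \<omega> * ai \<omega>)"
      by (rule mult_right_mono[OF c1 c2])
    thus ?thesis by simp
  qed
  also have "expectation W0 \<le> 1" using Suc.IH tT unfolding W0_def by simp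
  finally show ?case .
qed

end

context bandit_mu begin

definition Ev :: "nat \<Rightarrow> nat \<Rightarrow> real \<Rightarrow> nat \<Rightarrow> nat \<Rightarrow> real \<Rightarrow> 'a set" where
  "Ev w k \<sigma> t m c = {\<omega> \<in> space M. m \<le> nS (run w (real w) (xh \<omega>) t) k \<and>
      real m * c \<le> \<sigma> * ((\<Sum>j=1..m. ZS (run w (real w) (xh \<omega>) t) k j) - real m * \<mu> k)}"

lemma Ev_sets: "Ev w k \<sigma> t m c \<in> sets M"
proof -
  have sx: "smeas M (\<lambda>\<omega>. run w (real w) (xh \<omega>) t)" by (rule smeas_xh)
  have n[measurable]: "(\<lambda>\<omega>. nS (run w (real w) (xh \<omega>) t) k) \<in> measurable M (count_space UNIV)"
    using sx by (simp add: smeas_def)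
  have Z[measurable]: "\<And>j. (\<lambda>\<omega>. ZS (run w (real w) (xh \<omega>) t) k j) \<in> borel_measurable M"
    using sx by (simp add: smeas_def)
  have p: "Measurable.pred M (\<lambda>\<omega>. m \<le> nS (run w (real w) (xh \<omega>) t) k)"
  proof -
    have "(\<lambda>\<omega>. m \<le> nS (run w (real w) (xh \<omega>) t) k) \<in> measurable M (count_space UNIV)"
      by (rule measurable_compose[OF n]) simp
    thus ?thesis by (simp add: pred_def)
  qed
  show ?thesis unfolding Ev_def using p by measurable
qed

lemma conc:
  assumes k: "k \<in> {1..K}" and \<sigma>: "\<bar>\<sigma>\<bar> = 1" and t: "t \<le> T" and m: "1 \<le> m" and c: "0 < c"
  shows "measure M (Ev w k \<sigma> t m c) \<le> exp (- (2 * real m * c\<^sup>2))"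
proof -
  define l where "l = 4 * c"
  have l: "0 < l" using c by (simp add: l_def)
  define a0 where "a0 = exp (2 * real m * c\<^sup>2)"
  have a0pos: "0 < a0" by (simp add: a0_def)
  let ?W = "\<lambda>\<omega>. Wf k m \<sigma> (\<mu> k) l (run w (real w) (xh \<omega>) t)"
  have pw: "a0 * indicator (Ev w k \<sigma> t m c) \<omega> \<le> ?W \<omega>" for \<omega>
  proof (cases "\<omega> \<in> Ev w k \<sigma> t m c")
    case True
    let ?s = "run w (real w) (xh \<omega>) t"
    have nm: "m \<le> nS ?s k" and sz: "real m * c \<le> \<sigma> * ((\<Sum>j=1..m. ZS ?s k j) - real m * \<mu> k)"
      using True by (auto simp: Ev_def)
    have mn: "min (nS ?s k) m = m" using nm by simp
    have "Sf k m \<sigma> (\<mu> k) ?s = \<sigma> * ((\<Sum>j=1..m. ZS ?s k j) - real m * \<mu> k)"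
      unfolding Sf_def mn by (simp add: sum_distrib_left sum_subtractf algebra_simps)
    hence "real m * c \<le> Sf k m \<sigma> (\<mu> k) ?s" using sz by simp
    hence "l * (real m * c) - l\<^sup>2 / 8 * real m \<le> l * Sf k m \<sigma> (\<mu> k) ?s - l\<^sup>2 / 8 * real (min (nS ?s k) m)"
      unfolding mn using l by (simp add: mult_left_mono)
    moreover have "l * (real m * c) - l\<^sup>2 / 8 * real m = 2 * real m * c\<^sup>2"
      unfolding l_def by (simp add: power2_eq_square algebra_simps)
    ultimately have "a0 \<le> ?W \<omega>" unfolding a0_def Wf_def by simp
    thus ?thesis using True by simp
  next
    case False thus ?thesis using Wf_pos[of k m \<sigma> "\<mu> k" l] by (simp add: less_imp_le)
  qed
  have sx: "smeas M (\<lambda>\<omega>. run w (real w) (xh \<omega>) t)" by (rule smeas_xh)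
  have Wm: "?W \<in> borel_measurable M" by (rule Wf_meas[OF sx])
  have Wi: "integrable M ?W"
  proof (rule intg[where B="exp (l * (real m * (1 + \<bar>\<mu> k\<bar>)))", OF Wm])
    fix \<omega> show "\<bar>?W \<omega>\<bar> \<le> exp (l * (real m * (1 + \<bar>\<mu> k\<bar>)))"
      by (rule Wf_bound[OF _ \<sigma>]) (use xh_Z_range l in auto)
  qed
  have Ii: "integrable M (\<lambda>\<omega>. a0 * indicator (Ev w k \<sigma> t m c) \<omega>)"
    using Ev_sets by (intro integrable_mult_right integrable_real_indicator) (auto simp: emeasure_eq_measure)
  have "a0 * measure M (Ev w k \<sigma> t m c) = expectation (\<lambda>\<omega>. a0 * indicator (Ev w k \<sigma> t m c) \<omega>)"
    using Ev_sets by (simp add: Int_absorb2 sets.sets_into_space)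
  also have "\<dots> \<le> expectation ?W" by (rule integral_mono[OF Ii Wi pw])
  also have "\<dots> \<le> 1" by (rule W_exp[OF k \<sigma> l t])
  finally have "measure M (Ev w k \<sigma> t m c) \<le> 1 / a0" using a0pos by (simp add: field_simps)
  thus ?thesis unfolding a0_def by (simp add: exp_minus divide_inverse)
qed

end

lemma ucb_real:
  fixes S1 S2 n1 n2 mus muk lt l :: real
  assumes n1: "1 \<le> n1" and n2: "l \<le> n2" and l: "0 < l" and lt: "0 \<le> lt"
    and D: "0 < mus - muk" and hl: "8 * lt / (mus - muk)\<^sup>2 \<le> l"
    and idx: "S1 / n1 + sqrt (2 * lt / n1) \<le> S2 / n2 + sqrt (2 * lt / n2)"
    and b1: "\<not> S1 \<le> n1 * mus - n1 * sqrt (2 * lt / n1)"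
    and b2: "\<not> n2 * c2 \<le> S2 - n2 * muk" and c2: "c2 = sqrt (2 * lt / n2)"
  shows False
proof -
  have n2p: "0 < n2" using n2 l by simp
  let ?c1 = "sqrt (2 * lt / n1)"
  have "n1 * (mus - ?c1) < S1" using b1 by (simp add: algebra_simps)
  hence h1: "mus - ?c1 < S1 / n1" using n1 by (simp add: field_simps)
  have "S2 < n2 * (muk + c2)" using b2 by (simp add: algebra_simps)
  hence h2: "S2 / n2 < muk + c2" using n2p by (simp add: field_simps)
  have "mus - muk < 2 * c2" using h1 h2 idx c2 by linarith
  hence "(mus - muk)\<^sup>2 < (2 * c2)\<^sup>2" using D by (intro power_strict_mono) auto
  also have "(2 * c2)\<^sup>2 = 8 * lt / n2" using c2 lt n2p by (simp add: power_mult_distrib)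
  finally have "(mus - muk)\<^sup>2 * n2 < 8 * lt" using n2p by (simp add: field_simps)
  moreover have "8 * lt \<le> l * (mus - muk)\<^sup>2" using hl D by (simp add: field_simps)
  moreover have "l * (mus - muk)\<^sup>2 \<le> n2 * (mus - muk)\<^sup>2" using n2 by (intro mult_right_mono) auto
  ultimately show False by (simp add: mult.commute)
qed

lemma telesc: "(\<Sum>t<T. 2 * real t / (real t + 1) ^ 4) \<le> 1 - 1 / (real T + 1)"
proof (induction T)
  case 0 then show ?case by simp
next
  case (Suc T)
  have key: "2 * real T * (real T + 2) \<le> (real T + 1) ^ 3"
  proof -
    have "2 * T * (T + 2) \<le> (T + 1) ^ 3"
      by (simp add: power3_eq_cube algebra_simps, metis le_SucI le_square trans_le_add1)
    hence "real (2 * T * (T + 2)) \<le> real ((T + 1) ^ 3)" by (simp only: of_nat_le_iff)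
    thus ?thesis by (simp only: of_nat_mult of_nat_add of_nat_power of_nat_numeral of_nat_1)
  qed
  have "2 * real T / (real T + 1) ^ 4 \<le> 1 / (real T + 1) - 1 / (real T + 2)"
  proof -
    have "1 / (real T + 1) - 1 / (real T + 2) = 1 / ((real T + 1) * (real T + 2))"
      by (simp add: field_simps)
    moreover have "2 * real T / (real T + 1) ^ 4 \<le> 1 / ((real T + 1) * (real T + 2))"
    proof -
      have "2 * real T * (real T + 2) * (real T + 1) \<le> (real T + 1) ^ 3 * (real T + 1)"
        using key by (intro mult_right_mono) auto
      hence h: "2 * real T * ((real T + 1) * (real T + 2)) \<le> 1 * (real T + 1) ^ 4"
        by (simp add: power_Suc2 numeral_eq_Suc algebra_simps)
      have p1: "0 < (real T + 1) ^ 4" and p2: "0 < (real T + 1) * (real T + 2)" by auto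
      show ?thesis using h p1 p2 by (simp add: frac_le_eq divide_le_eq le_divide_eq)
    qed
    ultimately show ?thesis by simp
  qed
  moreover have "1 / (real (Suc T) + 1) = 1 / (real T + 2)" by simp
  moreover have "(\<Sum>t<Suc T. 2 * real t / (real t + 1) ^ 4) = (\<Sum>t<T. 2 * real t / (real t + 1) ^ 4) + 2 * real T / (real T + 1) ^ 4"
    by simp
  ultimately show ?case using Suc by linarith
qed

context mucb begin

lemma bad_event:
  assumes inr: "inr x (Suc t)" and nf: "\<not> (1 \<le> Suc t mod L \<and> Suc t mod L \<le> K)"
    and a: "act w (real w) x t = k" and ks: "ks \<in> {1..K}" and l1: "1 \<le> l"
    and ln: "l \<le> nS (run w (real w) x t) k"
    and D: "0 < mus - muk" and hl: "8 * ln (real (Suc t)) / (mus - muk)\<^sup>2 \<le> real l"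
  shows "(1 \<le> nS (run w (real w) x t) ks \<and>
          \<not> (sum (ZS (run w (real w) x t) ks) {1..nS (run w (real w) x t) ks} >
               real (nS (run w (real w) x t) ks) * mus - real (nS (run w (real w) x t) ks) *
               sqrt (2 * ln (real (Suc t)) / real (nS (run w (real w) x t) ks)))) \<or>
         (l \<le> nS (run w (real w) x t) k \<and>
          real (nS (run w (real w) x t) k) * sqrt (2 * ln (real (Suc t)) / real (nS (run w (real w) x t) k))
            \<le> sum (ZS (run w (real w) x t) k) {1..nS (run w (real w) x t) k} - real (nS (run w (real w) x t) k) * muk)"
proof (rule ccontr)
  let ?s = "run w (real w) x t"
  let ?n = "nS ?s"
  let ?Z = "ZS ?s"
  assume nb: "\<not> ?thesis"
  have it: "inr x t" using inr inr_mono by auto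
  have am: "k \<in> ucb_argmax K ?n ?Z 0 (Suc t)" using nr_act_ucb[OF it nf, where w=w] a by simp
  have nk: "1 \<le> ?n k" using l1 ln by simp
  have nz: "\<not> (\<exists>k'\<in>{1..K}. ?n k' = 0)"
  proof
    assume "\<exists>k'\<in>{1..K}. ?n k' = 0"
    hence "?n k = 0" using am by (auto simp: ucb_argmax_def)
    with nk show False by simp
  qed
  hence nks: "1 \<le> ?n ks" using ks by (metis less_one not_le)
  have "ucb_argmax K ?n ?Z 0 (Suc t) = {k\<in>{1..K}. \<forall>k'\<in>{1..K}. ucb_index ?n ?Z 0 (Suc t) k' \<le> ucb_index ?n ?Z 0 (Suc t) k}"
    unfolding ucb_argmax_def by (rule if_not_P[OF nz])
  hence "ucb_index ?n ?Z 0 (Suc t) ks \<le> ucb_index ?n ?Z 0 (Suc t) k"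
    using am ks by auto
  hence idx: "sum (?Z ks) {1..?n ks} / real (?n ks) + sqrt (2 * ln (real (Suc t)) / real (?n ks))
          \<le> sum (?Z k) {1..?n k} / real (?n k) + sqrt (2 * ln (real (Suc t)) / real (?n k))"
    by (simp add: ucb_index_def)
  show False
  proof (rule ucb_real[OF _ _ _ _ D _ idx])
    show "1 \<le> real (?n ks)" using nks by simp
    show "real l \<le> real (?n k)" using ln by simp
    show "0 < real l" using l1 by simp
    show "0 \<le> ln (real (Suc t))" by simp
    show "8 * ln (real (Suc t)) / (mus - muk)\<^sup>2 \<le> real l" by (rule hl)
    show "\<not> sum (?Z ks) {1..?n ks} \<le> real (?n ks) * mus - real (?n ks) * sqrt (2 * ln (real (Suc t)) / real (?n ks))"
      using nb nks by auto
    show "\<not> real (?n k) * sqrt (2 * ln (real (Suc t)) / real (?n k)) \<le> sum (?Z k) {1..?n k} - real (?n k) * muk"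
      using nb ln by auto
  qed simp
qed

end

context bandit_mu begin

definition cc :: "nat \<Rightarrow> nat \<Rightarrow> real" where
  "cc t m = sqrt (2 * ln (real (Suc t)) / real m)"

definition Bad :: "nat \<Rightarrow> nat \<Rightarrow> nat \<Rightarrow> nat \<Rightarrow> 'a set" where
  "Bad w k ks t = (\<Union>m\<in>{1..t}. Ev w ks (-1) t m (cc t m)) \<union> (\<Union>m\<in>{1..t}. Ev w k 1 t m (cc t m))"

lemma Bad_sets: "Bad w k ks t \<in> sets M"
  unfolding Bad_def using Ev_sets by auto

lemma Ev_cc:
  assumes k: "k \<in> {1..K}" and \<sigma>: "\<bar>\<sigma>\<bar> = 1" and t: "t \<le> T" and m: "m \<in> {1..t}"
  shows "measure M (Ev w k \<sigma> t m (cc t m)) \<le> 1 / (real t + 1) ^ 4"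
proof -
  have m1: "1 \<le> m" and t1: "1 \<le> t" using m by auto
  have lnp: "0 < ln (real (Suc t))" using t1 by simp
  have c: "0 < cc t m" unfolding cc_def using lnp m1 by simp
  have "measure M (Ev w k \<sigma> t m (cc t m)) \<le> exp (- (2 * real m * (cc t m)\<^sup>2))"
    by (rule conc[OF k \<sigma> t m1 c])
  also have "2 * real m * (cc t m)\<^sup>2 = 4 * ln (real (Suc t))"
    unfolding cc_def using lnp m1 by (simp add: power2_eq_square[symmetric])
  also have "exp (- (4 * ln (real (Suc t)))) = 1 / (real t + 1) ^ 4"
  proof -
    have x: "0 < real (Suc t)" by simp
    have "exp (4 * ln (real (Suc t))) = exp (ln (real (Suc t) ^ 4))" using x by (simp add: ln_realpow)
    also have "\<dots> = real (Suc t) ^ 4" using x by simp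
    finally have "exp (4 * ln (real (Suc t))) = (real t + 1) ^ 4" by (simp add: add.commute)
    thus ?thesis by (simp add: exp_minus divide_inverse)
  qed
  finally show ?thesis .
qed

lemma Bad_prob:
  assumes k: "k \<in> {1..K}" and ks: "ks \<in> {1..K}" and t: "t \<le> T"
  shows "measure M (Bad w k ks t) \<le> 2 * real t / (real t + 1) ^ 4"
proof -
  have u1: "measure M (\<Union>m\<in>{1..t}. Ev w ks (-1) t m (cc t m)) \<le> real t / (real t + 1) ^ 4"
  proof -
    have "measure M (\<Union>m\<in>{1..t}. Ev w ks (-1) t m (cc t m)) \<le> (\<Sum>m\<in>{1..t}. measure M (Ev w ks (-1) t m (cc t m)))"
      by (rule measure_UNION_le) (auto intro: Ev_sets)
    also have "\<dots> \<le> (\<Sum>m\<in>{1..t}. 1 / (real t + 1) ^ 4)"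
      by (rule sum_mono) (rule Ev_cc[OF ks _ t], auto)
    finally show ?thesis by simp
  qed
  have u2: "measure M (\<Union>m\<in>{1..t}. Ev w k 1 t m (cc t m)) \<le> real t / (real t + 1) ^ 4"
  proof -
    have "measure M (\<Union>m\<in>{1..t}. Ev w k 1 t m (cc t m)) \<le> (\<Sum>m\<in>{1..t}. measure M (Ev w k 1 t m (cc t m)))"
      by (rule measure_UNION_le) (auto intro: Ev_sets)
    also have "\<dots> \<le> (\<Sum>m\<in>{1..t}. 1 / (real t + 1) ^ 4)"
      by (rule sum_mono) (rule Ev_cc[OF k _ t], auto)
    finally show ?thesis by simp
  qed
  have "measure M (Bad w k ks t) \<le> measure M (\<Union>m\<in>{1..t}. Ev w ks (-1) t m (cc t m)) + measure M (\<Union>m\<in>{1..t}. Ev w k 1 t m (cc t m))"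
    unfolding Bad_def by (rule measure_Un_le) (auto intro: Ev_sets)
  thus ?thesis using u1 u2 by simp
qed

definition Nk :: "nat \<Rightarrow> nat \<Rightarrow> 'a \<Rightarrow> real" where
  "Nk w k \<omega> = (\<Sum>t<T. if act w (real w) (xh \<omega>) t = k then 1 else 0)"

lemma card_real_sum: "finite A \<Longrightarrow> real (card {t \<in> A. P t}) = (\<Sum>t\<in>A. if P t then 1 else 0)"
  by (simp add: sum.inter_filter[symmetric])

lemma count_bound:
  assumes om: "\<omega> \<in> space M" and k: "k \<in> {1..K}" and ks: "ks \<in> {1..K}" and l1: "1 \<le> l"
    and D: "0 < \<mu> ks - \<mu> k" and hl: "8 * ln (real T) / (\<mu> ks - \<mu> k)\<^sup>2 \<le> real l"
  shows "Nk w k \<omega> \<le> real l + real (T div L + 1) + (\<Sum>t<T. indicator (Bad w k ks t) \<omega>)"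
proof -
  let ?x = "xh \<omega>"
  let ?A = "\<lambda>t. act w (real w) ?x t"
  let ?n = "\<lambda>t. nS (run w (real w) ?x t) k"
  let ?forced = "\<lambda>t. 1 \<le> Suc t mod L \<and> Suc t mod L \<le> K"
  define S where "S = {t \<in> {..<T}. ?A t = k}"
  define S1 where "S1 = {t \<in> {..<T}. ?A t = k \<and> ?n t < l}"
  define S2 where "S2 = {t \<in> {..<T}. ?A t = k \<and> ?forced t}"
  define S3 where "S3 = {t \<in> {..<T}. \<omega> \<in> Bad w k ks t}"
  have sub: "S \<subseteq> S1 \<union> S2 \<union> S3"
  proof
    fix t assume "t \<in> S"
    hence tT: "t < T" and a: "?A t = k" by (auto simp: S_def)
    show "t \<in> S1 \<union> S2 \<union> S3"
    proof (cases "?n t < l \<or> ?forced t")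
      case True thus ?thesis using tT a by (auto simp: S1_def S2_def)
    next
      case False
      hence ln: "l \<le> ?n t" and nf: "\<not> ?forced t" by auto
      have hl': "8 * ln (real (Suc t)) / (\<mu> ks - \<mu> k)\<^sup>2 \<le> real l"
      proof -
        have "ln (real (Suc t)) \<le> ln (real T)" using tT by simp
        hence "8 * ln (real (Suc t)) / (\<mu> ks - \<mu> k)\<^sup>2 \<le> 8 * ln (real T) / (\<mu> ks - \<mu> k)\<^sup>2"
          using D by (intro divide_right_mono) auto
        thus ?thesis using hl by linarith
      qed
      note be = bad_event[OF xh_inr nf a ks l1 ln D hl']
      let ?s = "run w (real w) ?x t"
      have "\<omega> \<in> Bad w k ks t"
      proof (cases "1 \<le> nS ?s ks \<and>
          \<not> (sum (ZS ?s ks) {1..nS ?s ks} >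
               real (nS ?s ks) * \<mu> ks - real (nS ?s ks) * sqrt (2 * ln (real (Suc t)) / real (nS ?s ks)))")
        case True
        let ?m = "nS ?s ks"
        have "?m \<le> t" by (rule n_le)
        hence mm: "?m \<in> {1..t}" using True by auto
        have "\<omega> \<in> Ev w ks (-1) t ?m (cc t ?m)"
          using True om unfolding Ev_def cc_def by (auto simp: algebra_simps)
        thus ?thesis using mm unfolding Bad_def by blast
      next
        case False
        hence C: "l \<le> ?n t \<and> real (?n t) * sqrt (2 * ln (real (Suc t)) / real (?n t))
            \<le> sum (ZS ?s k) {1..?n t} - real (?n t) * \<mu> k" using be by blast
        have "?n t \<le> t" by (rule n_le)
        hence mm: "?n t \<in> {1..t}" using C l1 by auto
        have "\<omega> \<in> Ev w k 1 t (?n t) (cc t (?n t))"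
          using C om unfolding Ev_def cc_def by auto
        thus ?thesis using mm unfolding Bad_def by blast
      qed
      thus ?thesis using tT by (auto simp: S3_def)
    qed
  qed
  have c1: "card S1 \<le> l"
  proof -
    have "card {s \<in> {..<T}. ?A s = k \<and> ?n s < l} \<le> min (?n T) l"
      by (rule small_count[where T=T, OF xh_inr]) simp
    thus ?thesis unfolding S1_def by simp
  qed
  have c2: "card S2 \<le> T div L + 1"
  proof -
    have inj: "inj_on Suc S2" by simp
    have "Suc ` S2 \<subseteq> {r \<in> {1..T}. r mod L = k}"
    proof
      fix r assume "r \<in> Suc ` S2"
      then obtain t where t: "t \<in> S2" "r = Suc t" by auto
      hence "?A t = Suc t mod L" using nr_act_forced[OF xh_inr] by (auto simp: S2_def)
      thus "r \<in> {r \<in> {1..T}. r mod L = k}" using t by (auto simp: S2_def)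
    qed
    hence "card (Suc ` S2) \<le> card {r \<in> {1..T}. r mod L = k}" by (intro card_mono) auto
    also have "\<dots> \<le> T div L + 1" by (rule mod_bound_card[OF L_pos])
    finally show ?thesis using card_image[OF inj] by simp
  qed
  have "Nk w k \<omega> = real (card S)" unfolding Nk_def S_def by (rule card_real_sum[symmetric]) simp
  also have "\<dots> \<le> real (card (S1 \<union> S2 \<union> S3))"
    using sub by (intro of_nat_mono card_mono) (auto simp: S1_def S2_def S3_def)
  also have "\<dots> \<le> real (card S1 + card S2 + card S3)"
    by (intro of_nat_mono order.trans[OF card_Un_le] add_right_mono card_Un_le)
  also have "\<dots> \<le> real l + real (T div L + 1) + real (card S3)" using c1 c2 by simp
  also have "real (card S3) = (\<Sum>t<T. indicator (Bad w k ks t) \<omega>)"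
    unfolding S3_def card_real_sum[OF finite_lessThan] by (intro sum.cong) (auto simp: indicator_def)
  finally show ?thesis .
qed

end

context bandit_mu begin

lemma act_xh_meas: "(\<lambda>\<omega>. act w b (xh \<omega>) t) \<in> measurable M (count_space UNIV)"
  by (rule action_meas[OF smeas_xh])

lemma Nk_meas: "Nk w k \<in> borel_measurable M"
proof -
  have [measurable]: "\<And>t. (\<lambda>\<omega>. act w (real w) (xh \<omega>) t) \<in> measurable M (count_space UNIV)"
    by (rule act_xh_meas)
  show ?thesis unfolding Nk_def by measurable
qed

lemma Nk_int: "integrable M (Nk w k)"
proof (rule intg[where B="real T", OF Nk_meas])
  fix \<omega>
  have "0 \<le> Nk w k \<omega>" unfolding Nk_def by (intro sum_nonneg) auto
  moreover have "Nk w k \<omega> \<le> (\<Sum>t<T. 1)" unfolding Nk_def by (intro sum_mono) auto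
  ultimately show "\<bar>Nk w k \<omega>\<bar> \<le> real T" by simp
qed

lemma ENk:
  assumes k: "k \<in> {1..K}" and ks: "ks \<in> {1..K}" and l1: "1 \<le> l"
    and D: "0 < \<mu> ks - \<mu> k" and hl: "8 * ln (real T) / (\<mu> ks - \<mu> k)\<^sup>2 \<le> real l"
  shows "expectation (Nk w k) \<le> real l + real (T div L) + 2"
proof -
  let ?g = "\<lambda>\<omega>. real l + real (T div L + 1) + (\<Sum>t<T. indicator (Bad w k ks t) \<omega>)"
  have ii: "integrable M (\<lambda>\<omega>. indicator (Bad w k ks t) \<omega> :: real)" for t
    using Bad_sets by (intro integrable_real_indicator) (auto simp: emeasure_eq_measure)
  have gi: "integrable M ?g" using ii by auto
  have "expectation (Nk w k) \<le> expectation ?g"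
    by (rule integral_mono[OF Nk_int gi]) (rule count_bound[OF _ k ks l1 D hl])
  also have "expectation ?g = real l + real (T div L + 1) + (\<Sum>t<T. measure M (Bad w k ks t))"
    using ii Bad_sets by (simp add: prob_space Int_absorb2 sets.sets_into_space)
  also have "(\<Sum>t<T. measure M (Bad w k ks t)) \<le> (\<Sum>t<T. 2 * real t / (real t + 1) ^ 4)"
    by (rule sum_mono) (rule Bad_prob[OF k ks], simp)
  also have "\<dots> \<le> 1" using telesc[of T] by (smt (verit) divide_nonneg_nonneg of_nat_0_le_iff)
  finally show ?thesis by simp
qed

end

context bandit_mu begin

lemma act_in: "act w b x t \<in> {1..K}" by (rule action_in)

lemma mu_act_meas: "(\<lambda>\<omega>. f (act w b (xh \<omega>) t)) \<in> borel_measurable M"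
  for f :: "nat \<Rightarrow> real"
  by (rule measurable_compose[OF act_xh_meas]) simp

lemma ind_meas: "(\<lambda>\<omega>. if act w b (xh \<omega>) t = k then 1 else 0 :: real) \<in> borel_measurable M"
  using mu_act_meas[of "\<lambda>a. if a = k then 1 else 0"] by simp

lemma X_int: "k \<in> {1..K} \<Longrightarrow> t \<in> {1..T} \<Longrightarrow> integrable M (X k t)"
  by (rule intg[where B=1]) (use rv range01 in auto)

lemma EX_act:
  assumes s: "s < T"
  shows "expectation (\<lambda>\<omega>. X (act w b (xh \<omega>) s) (Suc s) \<omega>) = expectation (\<lambda>\<omega>. \<mu> (act w b (xh \<omega>) s))"
proof -
  let ?A = "\<lambda>\<omega>. act w b (xh \<omega>) s"
  let ?ind = "\<lambda>k \<omega>. if ?A \<omega> = k then 1 else 0 :: real"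
  have e1: "\<And>\<omega>. X (?A \<omega>) (Suc s) \<omega> = (\<Sum>k\<in>{1..K}. ?ind k \<omega> * X k (Suc s) \<omega>)"
  proof -
    fix \<omega>
    have "(\<Sum>k\<in>{1..K}. ?ind k \<omega> * X k (Suc s) \<omega>) = (\<Sum>k\<in>{1..K}. if ?A \<omega> = k then X k (Suc s) \<omega> else 0)"
      by (intro sum.cong) auto
    also have "\<dots> = X (?A \<omega>) (Suc s) \<omega>" using act_in[where w=w and b=b and x="xh \<omega>" and t=s] by (simp add: sum.delta)
    finally show "X (?A \<omega>) (Suc s) \<omega> = (\<Sum>k\<in>{1..K}. ?ind k \<omega> * X k (Suc s) \<omega>)" by simp
  qed
  have e2: "\<And>\<omega>. \<mu> (?A \<omega>) = (\<Sum>k\<in>{1..K}. ?ind k \<omega> * \<mu> k)"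
  proof -
    fix \<omega>
    have "(\<Sum>k\<in>{1..K}. ?ind k \<omega> * \<mu> k) = (\<Sum>k\<in>{1..K}. if ?A \<omega> = k then \<mu> k else 0)"
      by (intro sum.cong) auto
    also have "\<dots> = \<mu> (?A \<omega>)" using act_in[where w=w and b=b and x="xh \<omega>" and t=s] by (simp add: sum.delta)
    finally show "\<mu> (?A \<omega>) = (\<Sum>k\<in>{1..K}. ?ind k \<omega> * \<mu> k)" by simp
  qed
  have indm: "\<And>k. ?ind k \<in> borel_measurable M" by (rule ind_meas)
  have indi: "\<And>k. integrable M (?ind k)"
    by (rule intg[where B=1]) (use indm in auto)
  have key: "expectation (\<lambda>\<omega>. ?ind k \<omega> * X k (Suc s) \<omega>) = expectation (?ind k) * \<mu> k"
    if k: "k \<in> {1..K}" for k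
  proof -
    define F where "F p = (if act w b (tab (I s) p) s = k then 1 else 0 :: real)" for p
    have st: "smeas (PiM (I s) (\<lambda>_. borel)) (\<lambda>p. run w b (tab (I s) p) s)" by (rule smeas_tab)
    have at: "(\<lambda>p. act w b (tab (I s) p) s) \<in> measurable (PiM (I s) (\<lambda>_. borel)) (count_space UNIV)"
      by (rule action_meas[OF st])
    have Fm: "F \<in> borel_measurable (PiM (I s) (\<lambda>_. borel))"
      unfolding F_def using measurable_compose[OF at, of "\<lambda>a. if a = k then 1 else 0 :: real" borel] by simp
    have H: "?ind k \<omega> = F (past s \<omega>)" for \<omega>
      unfolding F_def run_xh_past[OF less_imp_le[OF s]] ..
    have "expectation (\<lambda>\<omega>. ?ind k \<omega> * X k (Suc s) \<omega>) = expectation (\<lambda>\<omega>. ?ind k \<omega> * clamp01 (X k (Suc s) \<omega>))"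
      by (rule Bochner_Integration.integral_cong) (use range01 k s in \<open>auto simp: clamp01_id\<close>)
    also have "\<dots> = expectation (?ind k) * expectation (\<lambda>\<omega>. clamp01 (X k (Suc s) \<omega>))"
      by (rule indep_fact[where B=1 and C=1, OF _ k Fm _ clamp01_meas _ H])
         (use s in \<open>auto simp: F_def clamp01_def\<close>)
    also have "expectation (\<lambda>\<omega>. clamp01 (X k (Suc s) \<omega>)) = expectation (X k (Suc s))"
      by (rule Bochner_Integration.integral_cong) (use range01 k s in \<open>auto simp: clamp01_id\<close>)
    also have "\<dots> = \<mu> k" using mean[of k "Suc s"] k s by simp
    finally show ?thesis .
  qed
  have "expectation (\<lambda>\<omega>. X (?A \<omega>) (Suc s) \<omega>) = expectation (\<lambda>\<omega>. \<Sum>k\<in>{1..K}. ?ind k \<omega> * X k (Suc s) \<omega>)"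
    unfolding e1 ..
  also have "\<dots> = (\<Sum>k\<in>{1..K}. expectation (\<lambda>\<omega>. ?ind k \<omega> * X k (Suc s) \<omega>))"
  proof (rule Bochner_Integration.integral_sum)
    fix k assume k: "k \<in> {1..K}"
    have Xm: "X k (Suc s) \<in> borel_measurable M" using rv k s by auto
    show "integrable M (\<lambda>\<omega>. ?ind k \<omega> * X k (Suc s) \<omega>)"
    proof (rule intg[where B=1])
      show "(\<lambda>\<omega>. ?ind k \<omega> * X k (Suc s) \<omega>) \<in> borel_measurable M" using indm[of k] Xm by measurable
      fix \<omega> assume "\<omega> \<in> space M"
      hence "X k (Suc s) \<omega> \<in> {0..1}" using range01 k s by auto
      thus "\<bar>?ind k \<omega> * X k (Suc s) \<omega>\<bar> \<le> 1" by auto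
    qed
  qed
  also have "\<dots> = (\<Sum>k\<in>{1..K}. expectation (?ind k) * \<mu> k)" by (intro sum.cong) (auto simp: key)
  also have "\<dots> = expectation (\<lambda>\<omega>. \<Sum>k\<in>{1..K}. ?ind k \<omega> * \<mu> k)"
    using indi by (subst Bochner_Integration.integral_sum) auto
  also have "\<dots> = expectation (\<lambda>\<omega>. \<mu> (?A \<omega>))" unfolding e2 ..
  finally show ?thesis .
qed

end

context bandit_mu begin

lemma X_act_eq: "X (act w b (xh \<omega>) s) (Suc s) \<omega> =
   (\<Sum>k\<in>{1..K}. (if act w b (xh \<omega>) s = k then 1 else 0) * X k (Suc s) \<omega>)"
proof -
  have "(\<Sum>k\<in>{1..K}. (if act w b (xh \<omega>) s = k then 1 else 0) * X k (Suc s) \<omega>)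
      = (\<Sum>k\<in>{1..K}. if act w b (xh \<omega>) s = k then X k (Suc s) \<omega> else 0)"
    by (intro sum.cong) auto
  also have "\<dots> = X (act w b (xh \<omega>) s) (Suc s) \<omega>"
    using act_in[where w=w and b=b and x="xh \<omega>" and t=s] by (simp add: sum.delta)
  finally show ?thesis by simp
qed

lemma X_act_int:
  assumes s: "s < T"
  shows "integrable M (\<lambda>\<omega>. X (act w b (xh \<omega>) s) (Suc s) \<omega>)"
proof -
  have "integrable M (\<lambda>\<omega>. \<Sum>k\<in>{1..K}. (if act w b (xh \<omega>) s = k then 1 else 0) * X k (Suc s) \<omega>)"
  proof (rule Bochner_Integration.integrable_sum)
    fix k assume k: "k \<in> {1..K}"
    have Xm: "X k (Suc s) \<in> borel_measurable M" using rv k s by auto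
    have im: "(\<lambda>\<omega>. if act w b (xh \<omega>) s = k then 1 else 0 :: real) \<in> borel_measurable M" by (rule ind_meas)
    show "integrable M (\<lambda>\<omega>. (if act w b (xh \<omega>) s = k then 1 else 0) * X k (Suc s) \<omega>)"
    proof (rule intg[where B=1])
      show "(\<lambda>\<omega>. (if act w b (xh \<omega>) s = k then 1 else 0) * X k (Suc s) \<omega>) \<in> borel_measurable M"
        using im Xm by measurable
      fix \<omega> assume "\<omega> \<in> space M"
      hence "X k (Suc s) \<omega> \<in> {0..1}" using range01 k s by auto
      thus "\<bar>(if act w b (xh \<omega>) s = k then 1 else 0) * X k (Suc s) \<omega>\<bar> \<le> 1" by auto
    qed
  qed
  thus ?thesis by (simp only: X_act_eq[symmetric])
qed

lemma mu_range:
  assumes T1: "1 \<le> T" and k: "k \<in> {1..K}"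
  shows "0 \<le> \<mu> k" "\<mu> k \<le> 1"
proof -
  have t: "1 \<in> {1..T}" using T1 by simp
  have m: "\<mu> k = expectation (X k 1)" by (rule mean[OF k t])
  have r: "\<And>\<omega>. \<omega> \<in> space M \<Longrightarrow> X k 1 \<omega> \<in> {0..1}" using range01 k t by blast
  show "0 \<le> \<mu> k" unfolding m by (rule integral_nonneg_AE) (use r in auto)
  have "expectation (X k 1) \<le> expectation (\<lambda>_. 1::real)"
    by (rule integral_mono[OF X_int[OF k t]]) (use r in auto)
  thus "\<mu> k \<le> 1" unfolding m by (simp add: prob_space)
qed

end

context bandit_mu begin

lemma main:
  assumes T1: "1 \<le> T"
  shows "(\<Sum>t=1..T. Max (\<mu> ` {1..K}))
           - expectation (\<lambda>\<omega>. \<Sum>t=1..T. X (mucb_arm K w b \<gamma> tb (\<lambda>k s. X k s \<omega>) t) t \<omega>)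
         \<le> real T * measure M {\<omega> \<in> space M. mucb_tau1 K w b \<gamma> tb (\<lambda>k s. X k s \<omega>) \<le> enat T}
           + (8 * (\<Sum>k\<in>{k\<in>{1..K}. Max (\<mu> ` {1..K}) - \<mu> k > 0}. ln (real T) / (Max (\<mu> ` {1..K}) - \<mu> k))
              + (1 + pi\<^sup>2 / 3 + real K) * (\<Sum>k=1..K. Max (\<mu> ` {1..K}) - \<mu> k))
           + \<gamma> * real T"
proof -
  define mus where "mus = Max (\<mu> ` {1..K})"
  have finK: "finite (\<mu> ` {1..K})" and neK: "\<mu> ` {1..K} \<noteq> {}" using K1 by auto
  obtain ks where ks: "ks \<in> {1..K}" "\<mu> ks = mus"
    using Max_in[OF finK neK] unfolding mus_def by auto
  have D0: "0 \<le> mus - \<mu> k" if "k \<in> {1..K}" for k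
    using Max_ge[OF finK] that unfolding mus_def by auto
  have D1: "mus - \<mu> k \<le> 1" if "k \<in> {1..K}" for k
    using mu_range[OF T1 that] mu_range[OF T1 ks(1)] ks(2) by linarith
  let ?A = "\<lambda>s \<omega>. act w b (xh \<omega>) s"
  let ?Ar = "\<lambda>s \<omega>. act w (real w) (xh \<omega>) s"
  define R where "R \<omega> = (\<Sum>s<T. mus - \<mu> (?A s \<omega>))" for \<omega>
  define R' where "R' \<omega> = (\<Sum>s<T. mus - \<mu> (?Ar s \<omega>))" for \<omega>
  define Dset where "Dset = {\<omega> \<in> space M. mucb_tau1 K w b \<gamma> tb (\<lambda>k s. X k s \<omega>) \<le> enat T}"
  have arm: "mucb_arm K w b \<gamma> tb (\<lambda>k s. X k s \<omega>) (Suc s) = ?A s \<omega>" if "\<omega> \<in> space M" "s < T" for \<omega> s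
    unfolding mucb_arm_def using run_X_xh[of s \<omega> w b] that by simp
  have reidx: "(\<Sum>t=1..T. f t) = (\<Sum>s<T. f (Suc s))" for f :: "nat \<Rightarrow> real"
  proof -
    have "{1..T} = Suc ` {..<T}" by (simp add: image_Suc_lessThan)
    thus ?thesis by (simp add: sum.reindex)
  qed
  have E1: "expectation (\<lambda>\<omega>. \<Sum>t=1..T. X (mucb_arm K w b \<gamma> tb (\<lambda>k s. X k s \<omega>) t) t \<omega>)
      = (\<Sum>s<T. expectation (\<lambda>\<omega>. \<mu> (?A s \<omega>)))"
  proof -
    have "expectation (\<lambda>\<omega>. \<Sum>t=1..T. X (mucb_arm K w b \<gamma> tb (\<lambda>k s. X k s \<omega>) t) t \<omega>)
        = expectation (\<lambda>\<omega>. \<Sum>s<T. X (?A s \<omega>) (Suc s) \<omega>)"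
    proof (rule Bochner_Integration.integral_cong[OF refl])
      fix \<omega> assume om: "\<omega> \<in> space M"
      show "(\<Sum>t=1..T. X (mucb_arm K w b \<gamma> tb (\<lambda>k s. X k s \<omega>) t) t \<omega>) = (\<Sum>s<T. X (?A s \<omega>) (Suc s) \<omega>)"
        unfolding reidx by (intro sum.cong refl) (simp add: arm[OF om])
    qed
    also have "\<dots> = (\<Sum>s<T. expectation (\<lambda>\<omega>. X (?A s \<omega>) (Suc s) \<omega>))"
      by (rule Bochner_Integration.integral_sum) (rule X_act_int, simp)
    also have "\<dots> = (\<Sum>s<T. expectation (\<lambda>\<omega>. \<mu> (?A s \<omega>)))"
      by (intro sum.cong) (auto intro: EX_act)
    finally show ?thesis .
  qed
  have muAi: "integrable M (\<lambda>\<omega>. \<mu> (act w bb (xh \<omega>) s))" for bb s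
  proof (rule intg[where B=1, OF mu_act_meas])
    fix \<omega> show "\<bar>\<mu> (act w bb (xh \<omega>) s)\<bar> \<le> 1"
      using mu_range[OF T1 act_in[where w=w and b=bb and x="xh \<omega>" and t=s]] by simp
  qed
  have Ri: "integrable M R" unfolding R_def using muAi by auto
  have R'i: "integrable M R'" unfolding R'_def using muAi by auto
  have ER: "expectation R = (\<Sum>s<T. mus - expectation (\<lambda>\<omega>. \<mu> (?A s \<omega>)))"
    unfolding R_def using muAi by (simp add: Bochner_Integration.integral_sum prob_space)
  have LHS: "(\<Sum>t=1..T. Max (\<mu> ` {1..K}))
           - expectation (\<lambda>\<omega>. \<Sum>t=1..T. X (mucb_arm K w b \<gamma> tb (\<lambda>k s. X k s \<omega>) t) t \<omega>) = expectation R"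
    unfolding E1 ER mus_def[symmetric] by (simp add: sum_subtractf)
  \<comment> \<open>Step 2: split on detection\<close>
  have Dset_eq: "Dset = {\<omega> \<in> space M. dS (run w b (xh \<omega>) T) \<noteq> None}"
    unfolding Dset_def tau1_le_iff using run_X_xh[of T _ w b] by auto
  have Dsets: "Dset \<in> sets M"
  proof -
    have "(\<lambda>\<omega>. dS (run w b (xh \<omega>) T)) \<in> measurable M (count_space UNIV)"
      using smeas_xh[of w b T] by (simp add: smeas_def)
    hence "Measurable.pred M (\<lambda>\<omega>. dS (run w b (xh \<omega>) T) \<noteq> None)"
      by (intro pred_intros_logic pred_count_space_const1)
    thus ?thesis unfolding Dset_eq by measurable
  qed
  have pw: "R \<omega> \<le> real T * indicator Dset \<omega> + R' \<omega>" if om: "\<omega> \<in> space M" for \<omega>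
  proof (cases "\<omega> \<in> Dset")
    case True
    have "R \<omega> \<le> (\<Sum>s<T. 1)" unfolding R_def by (intro sum_mono D1 act_in)
    moreover have "0 \<le> R' \<omega>" unfolding R'_def by (intro sum_nonneg D0 act_in)
    ultimately show ?thesis using True by simp
  next
    case False
    hence dN: "dS (run w b (xh \<omega>) T) = None" using om Dset_eq by auto
    have "R \<omega> = R' \<omega>" unfolding R_def R'_def
    proof (intro sum.cong refl)
      fix s assume "s \<in> {..<T}"
      hence "s \<le> T" by simp
      hence "dS (run w b (xh \<omega>) s) = None" using d_mono dN by blast
      hence "run w b (xh \<omega>) s = run w (real w) (xh \<omega>) s" by (rule couple[OF xh_inr])
      thus "mus - \<mu> (?A s \<omega>) = mus - \<mu> (?Ar s \<omega>)" by simp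
    qed
    thus ?thesis using False by simp
  qed
  have Ii: "integrable M (\<lambda>\<omega>. real T * indicator Dset \<omega> :: real)"
    using Dsets by (intro integrable_mult_right integrable_real_indicator) (auto simp: emeasure_eq_measure)
  have ER_le: "expectation R \<le> real T * measure M Dset + expectation R'"
  proof -
    have "expectation R \<le> expectation (\<lambda>\<omega>. real T * indicator Dset \<omega> + R' \<omega>)"
      by (rule integral_mono[OF Ri _ pw]) (use Ii R'i in auto)
    also have "\<dots> = real T * measure M Dset + expectation R'"
      using Ii R'i Dsets by (simp add: Int_absorb2 sets.sets_into_space)
    finally show ?thesis .
  qed
  define Dl where "Dl k = mus - \<mu> k" for k
  have R'eq: "R' \<omega> = (\<Sum>k\<in>{1..K}. Dl k * Nk w k \<omega>)" for \<omega>
  proof -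
    have "R' \<omega> = (\<Sum>s<T. \<Sum>k\<in>{1..K}. Dl k * (if ?Ar s \<omega> = k then 1 else 0))"
      unfolding R'_def
    proof (intro sum.cong refl)
      fix s
      have "(\<Sum>k\<in>{1..K}. Dl k * (if ?Ar s \<omega> = k then 1 else 0)) = (\<Sum>k\<in>{1..K}. if ?Ar s \<omega> = k then Dl k else 0)"
        by (intro sum.cong) auto
      also have "\<dots> = Dl (?Ar s \<omega>)"
        using act_in[where w=w and b="real w" and x="xh \<omega>" and t=s] by (simp add: sum.delta)
      finally show "mus - \<mu> (?Ar s \<omega>) = (\<Sum>k\<in>{1..K}. Dl k * (if ?Ar s \<omega> = k then 1 else 0))"
        unfolding Dl_def by simp
    qed
    also have "\<dots> = (\<Sum>k\<in>{1..K}. \<Sum>s<T. Dl k * (if ?Ar s \<omega> = k then 1 else 0))" by (rule sum.swap)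
    also have "\<dots> = (\<Sum>k\<in>{1..K}. Dl k * Nk w k \<omega>)" unfolding Nk_def by (simp add: sum_distrib_left)
    finally show ?thesis .
  qed
  have ER': "expectation R' = (\<Sum>k\<in>{1..K}. Dl k * expectation (Nk w k))"
    unfolding R'eq using Nk_int by (simp add: Bochner_Integration.integral_sum)
  have lnT: "0 \<le> ln (real T)" using T1 by simp
  have perk: "Dl k * expectation (Nk w k) \<le> (if Dl k > 0 then 8 * (ln (real T) / Dl k) else 0) + 3 * Dl k + Dl k * real (T div L)"
    if k: "k \<in> {1..K}" for k
  proof (cases "Dl k > 0")
    case False
    hence "Dl k = 0" using D0[OF k] unfolding Dl_def by simp
    thus ?thesis by simp
  next
    case True
    define y where "y = 8 * ln (real T) / (Dl k)\<^sup>2"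
    have y0: "0 \<le> y" unfolding y_def using lnT by simp
    define l where "l = max 1 (nat \<lceil>y\<rceil>)"
    have l1: "1 \<le> l" unfolding l_def by simp
    have hl: "y \<le> real l"
    proof -
      have "y \<le> real (nat \<lceil>y\<rceil>)" by (rule real_nat_ceiling_ge)
      moreover have "nat \<lceil>y\<rceil> \<le> l" unfolding l_def by simp
      ultimately show ?thesis by (meson of_nat_le_iff order.trans)
    qed
    have lu: "real l \<le> y + 1"
    proof -
      have "real (nat \<lceil>y\<rceil>) \<le> y + 1" using y0 by linarith
      thus ?thesis unfolding l_def using y0 by (auto simp: max_def)
    qed
    have D: "0 < \<mu> ks - \<mu> k" using True ks(2) unfolding Dl_def by simp
    have "expectation (Nk w k) \<le> real l + real (T div L) + 2"
      by (rule ENk[OF k ks(1) l1 D]) (use hl ks(2) in \<open>simp add: y_def Dl_def\<close>)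
    also have "\<dots> \<le> y + 3 + real (T div L)" using lu by simp
    finally have "Dl k * expectation (Nk w k) \<le> Dl k * (y + 3 + real (T div L))"
      using True by (intro mult_left_mono) auto
    also have "Dl k * y = 8 * (ln (real T) / Dl k)" unfolding y_def using True
      by (simp add: power2_eq_square field_simps)
    hence "Dl k * (y + 3 + real (T div L)) = 8 * (ln (real T) / Dl k) + 3 * Dl k + Dl k * real (T div L)"
      by (simp add: algebra_simps)
    finally show ?thesis using True by simp
  qed
  have sumF: "(\<Sum>k\<in>{1..K}. if Dl k > 0 then 8 * (ln (real T) / Dl k) else 0)
      = 8 * (\<Sum>k\<in>{k\<in>{1..K}. mus - \<mu> k > 0}. ln (real T) / (mus - \<mu> k))"
    by (simp add: sum.inter_filter[symmetric] sum_distrib_left Dl_def)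
  define SD where "SD = (\<Sum>k\<in>{1..K}. Dl k)"
  have SD0: "0 \<le> SD" unfolding SD_def Dl_def by (intro sum_nonneg D0)
  have SDK: "SD \<le> real K - 1"
  proof -
    have "SD = Dl ks + (\<Sum>k\<in>{1..K} - {ks}. Dl k)" unfolding SD_def
      using ks(1) by (simp add: sum.remove)
    also have "Dl ks = 0" unfolding Dl_def using ks(2) by simp
    also have "(\<Sum>k\<in>{1..K} - {ks}. Dl k) \<le> (\<Sum>k\<in>{1..K} - {ks}. 1)"
      by (intro sum_mono) (auto simp: Dl_def intro: D1)
    also have "\<dots> = real K - 1" using ks(1) by (simp add: of_nat_diff)
    finally show ?thesis by simp
  qed
  have ER'_le: "expectation R' \<le> 8 * (\<Sum>k\<in>{k\<in>{1..K}. mus - \<mu> k > 0}. ln (real T) / (mus - \<mu> k)) + 3 * SD + SD * real (T div L)"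
  proof -
    have "expectation R' \<le> (\<Sum>k\<in>{1..K}. (if Dl k > 0 then 8 * (ln (real T) / Dl k) else 0) + 3 * Dl k + Dl k * real (T div L))"
      unfolding ER' by (intro sum_mono perk)
    also have "\<dots> = 8 * (\<Sum>k\<in>{k\<in>{1..K}. mus - \<mu> k > 0}. ln (real T) / (mus - \<mu> k)) + 3 * SD + SD * real (T div L)"
      unfolding sum.distrib sumF SD_def by (simp add: sum_distrib_left sum_distrib_right)
    finally show ?thesis .
  qed
  have gam: "SD * real (T div L) \<le> \<gamma> * real T"
  proof -
    have Lp: "0 < real L" using L_pos by simp
    have "real (T div L) * real L \<le> real T"
      by (metis of_nat_le_iff of_nat_mult div_times_less_eq_dividend)
    hence "real (T div L) \<le> real T / real L" using Lp by (simp add: le_divide_eq)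
    hence "SD * real (T div L) \<le> SD * (real T / real L)" using SD0 by (intro mult_left_mono) auto
    also have "\<dots> \<le> (real K - 1) * (real T / real L)" using SDK by (intro mult_right_mono) auto
    also have "\<dots> \<le> (\<gamma> * real L) * (real T / real L)" using L_gamma by (intro mult_right_mono) auto
    also have "\<dots> = \<gamma> * real T" using Lp by simp
    finally show ?thesis .
  qed
  have pi3: "3 * SD \<le> (1 + pi\<^sup>2 / 3 + real K) * SD"
  proof -
    have "3 * 3 \<le> pi * pi" using pi_gt3 by (intro mult_mono) auto
    hence "9 \<le> pi\<^sup>2" by (simp add: power2_eq_square)
    hence "3 \<le> 1 + pi\<^sup>2 / 3 + real K" by simp
    thus ?thesis using SD0 by (intro mult_right_mono) auto
  qed
  have "expectation R \<le> real T * measure M Dset + (8 * (\<Sum>k\<in>{k\<in>{1..K}. mus - \<mu> k > 0}. ln (real T) / (mus - \<mu> k))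
       + (1 + pi\<^sup>2 / 3 + real K) * SD) + \<gamma> * real T"
    using ER_le ER'_le gam pi3 by linarith
  thus ?thesis unfolding LHS Dset_def SD_def Dl_def mus_def .
qed

end

theorem lemma1:
  fixes M :: "'a measure"
    and X :: "nat \<Rightarrow> nat \<Rightarrow> 'a \<Rightarrow> real"
    and \<mu> :: "nat \<Rightarrow> real"
    and K T w :: nat and b \<gamma> :: real
    and tb :: "nat \<Rightarrow> nat set \<Rightarrow> nat"
  assumes "prob_space M"
    and "K \<ge> 1"
    and rv: "\<And>k t. k \<in> {1..K} \<Longrightarrow> t \<in> {1..T} \<Longrightarrow> X k t \<in> borel_measurable M"
    and range01: "\<And>k t \<omega>. k \<in> {1..K} \<Longrightarrow> t \<in> {1..T} \<Longrightarrow> \<omega> \<in> space M \<Longrightarrow> X k t \<omega> \<in> {0..1}"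
    and indep: "prob_space.indep_vars M (\<lambda>_. borel) (\<lambda>(k, t). X k t) ({1..K} \<times> {1..T})"
    and stationary: "\<And>k t. k \<in> {1..K} \<Longrightarrow> t \<in> {1..T} \<Longrightarrow> distr M borel (X k t) = distr M borel (X k 1)"
    and mean: "\<And>k t. k \<in> {1..K} \<Longrightarrow> t \<in> {1..T} \<Longrightarrow> \<mu> k = prob_space.expectation M (X k t)"
    and "even w" and "w > 0" and "b > 0" and "0 < \<gamma>" and "\<gamma> \<le> 1"
    and tb: "\<And>t S. S \<noteq> {} \<Longrightarrow> S \<subseteq> {1..K} \<Longrightarrow> tb t S \<in> S"
  shows "(\<Sum>t=1..T. Max (\<mu> ` {1..K}))
           - prob_space.expectation M
               (\<lambda>\<omega>. \<Sum>t=1..T. X (mucb_arm K w b \<gamma> tb (\<lambda>k s. X k s \<omega>) t) t \<omega>)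
         \<le> real T * measure M {\<omega> \<in> space M. mucb_tau1 K w b \<gamma> tb (\<lambda>k s. X k s \<omega>) \<le> enat T}
           + (8 * (\<Sum>k\<in>{k\<in>{1..K}. Max (\<mu> ` {1..K}) - \<mu> k > 0}. ln (real T) / (Max (\<mu> ` {1..K}) - \<mu> k))
              + (1 + pi\<^sup>2 / 3 + real K) * (\<Sum>k=1..K. Max (\<mu> ` {1..K}) - \<mu> k))
           + \<gamma> * real T"
proof -
  have m: "mucb K \<gamma> tb"
    by (rule mucb.intro) (rule assms(2), rule assms(11), rule assms(12), rule tb)
  have bd: "bandit K \<gamma> tb M X T"
    by (rule bandit.intro[OF m assms(1)], rule bandit_axioms.intro)
       (rule rv, assumption+, rule range01, assumption+, rule indep)
  have bm: "bandit_mu K \<gamma> tb M X T \<mu>"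
    by (rule bandit_mu.intro[OF bd], rule bandit_mu_axioms.intro) (rule mean)
  interpret bandit_mu K \<gamma> tb M X T \<mu> by (rule bm)
  show ?thesis
  proof (cases "T = 0")
    case False
    hence "1 \<le> T" by simp
    thus ?thesis by (rule main)
  next
    case True
    have fin: "finite (\<mu> ` {1..K})" by simp
    have "0 \<le> (\<Sum>k=1..K. Max (\<mu> ` {1..K}) - \<mu> k)"
      by (intro sum_nonneg) (use Max_ge[OF fin] in auto)
    moreover have "0 \<le> 1 + pi\<^sup>2 / 3 + real K" by (simp add: add_nonneg_nonneg)
    ultimately have "0 \<le> (1 + pi\<^sup>2 / 3 + real K) * (\<Sum>k=1..K. Max (\<mu> ` {1..K}) - \<mu> k)" by simp
    thus ?thesis using True by simp
  qed
qed

end
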